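(* Let $X$ be a real Hilbert space, $A,B\colon X\rightrightarrows X$ maximally monotone, $T:=\operatorname{Id}-J_A+J_BR_A$, $v:=P_{\overline{\operatorname{ran}}(\operatorname{Id}-T)}(0)$, $D:=\operatorname{dom}A-\operatorname{dom}B$, $R:=\operatorname{ran}A+\operatorname{ran}B$, $v_D:=P_{\overline D}(0)$, $v_R:=P_{\overline R}(0)$, and assume $\overline{\operatorname{ran}}(\operatorname{Id}-T)=\overline{D\cap R}=\overline D\cap\overline R$. Suppose that $f\in\operatorname{Fix}(v+T)$ and let $x\in X$. Then: (i) the sequence $(J_AT^nx+nv_R,\,J_{A^{-1}}T^nx+nv_D)_{n\in\mathbb N}$ is Fejér monotone with respect to $\{(J_Ay,J_{A^{-1}}y): y\in\operatorname{Fix}(v+T)\}$; (ii) the sequence $(J_AT^nx+nv_R,\,J_{A^{-1}}T^nx+nv_D)_{n}$ is bounded; (iii) the sequence $(J_BR_AT^nx+nv_R,\,J_{B^{-1}}R_AT^nx-nv_D)_n$ is bounded; (iv) the sequence $\big((0,-v)+(J_AT^nx+nv_R,\,J_{A^{-1}}T^nx+nv_D)\big)_n$ is Fejér monotone with respect to $\mathcal S$; (v) $(J_AT^nx)_n$ is bounded if and only if $v_R=0$; (vi) if $v_R\neq0$, then $\|J_AT^nx\|\to+\infty$; (vii) $(J_{A^{-1}}T^nx)_n$ is bounded if and only if $v_D=0$; (viii) if $v_D\neq0$, then $\|J_{A^{-1}}T^nx\|\to+\infty$; (ix) if $A$ and $B$ are paramonotone, then the sequence $\big((0,-v)+(J_AT^nx+nv_R,\,J_{A^{-1}}T^nx+nv_D)\big)_n$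 is Fejér monotone with respect to $Z\times K$.
   Context: $J_C:=(\operatorname{Id}+C)^{-1}$, $R_C:=2J_C-\operatorname{Id}$ for maximally monotone $C$. $P_S$ is the projection onto a nonempty closed convex set. $\operatorname{Fix}(v+T):=\{y\in X: y=v+Ty\}$. A sequence $(x_n)$ in a Hilbert space (here $X\times X$ with the product norm) is Fejér monotone with respect to a nonempty set $C$ if $\|x_{n+1}-c\|\le\|x_n-c\|$ for all $c\in C$ and $n$. $\mathcal S:=\{(z,k)\in X\times X: -k\in B(z-v),\ k\in -v+Az\}$. $Z:=\{x\in X: 0\in -v+Ax+B(x-v)\}$ and $K:=\{k\in X: 0\in(-v+A)^{-1}(k)+(B(\cdot-v))^{-\vee}(k)\}$, where for an operator $M$, $M^{-\vee}:=(-\operatorname{Id})\circ M^{-1}\circ(-\operatorname{Id})$; equivalently $K=\{k: A^{-1}(k+v)\cap(v+B^{-1}(-k))\neq\varnothing\}$. A monotone $C$ is paramonotone if whenever $(x,u),(y,w)\in\operatorname{gra}C$ and $\langle x-y,u-w\rangle=0$, then $(x,w),(y,u)\in\operatorname{gra}C$. *)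

theory Defs
  imports "HOL-Analysis.Analysis"
begin

text \<open>Set-valued operators on a real Hilbert space are modelled as functions
  'a => 'a set (the value at x is the set Ax).\<close>

definition op_dom :: "('a \<Rightarrow> 'b set) \<Rightarrow> 'a set" where
  "op_dom A = {x. A x \<noteq> {}}"

definition op_ran :: "('a \<Rightarrow> 'b set) \<Rightarrow> 'b set" where
  "op_ran A = (\<Union>x. A x)"

definition op_inv :: "('a \<Rightarrow> 'b set) \<Rightarrow> 'b \<Rightarrow> 'a set" where
  "op_inv A u = {x. u \<in> A x}"

definition monotone_op :: "('a::real_inner \<Rightarrow> 'a set) \<Rightarrow> bool" where
  "monotone_op A \<longleftrightarrow>
     (\<forall>x y u w. u \<in> A x \<longrightarrow> w \<in> A y \<longrightarrow> 0 \<le> inner (x - y) (u - w))"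

definition max_monotone :: "('a::real_inner \<Rightarrow> 'a set) \<Rightarrow> bool" where
  "max_monotone A \<longleftrightarrow> monotone_op A \<and>
     (\<forall>B. monotone_op B \<and> (\<forall>x. A x \<subseteq> B x) \<longrightarrow> B = A)"

definition paramonotone :: "('a::real_inner \<Rightarrow> 'a set) \<Rightarrow> bool" where
  "paramonotone C \<longleftrightarrow> monotone_op C \<and>
     (\<forall>x y u w. u \<in> C x \<longrightarrow> w \<in> C y \<longrightarrow> inner (x - y) (u - w) = 0
        \<longrightarrow> w \<in> C x \<and> u \<in> C y)"

text \<open>Resolvent J_C = (Id + C)^{-1}; single-valued with full domain for
  maximally monotone C (Minty), so we take the unique element.\<close>
definition resolvent :: "('a::real_inner \<Rightarrow> 'a set) \<Rightarrow> 'a \<Rightarrow> 'a" where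
  "resolvent C x = (THE p. x - p \<in> C p)"

definition reflected :: "('a::real_inner \<Rightarrow> 'a set) \<Rightarrow> 'a \<Rightarrow> 'a" where
  "reflected C x = 2 *\<^sub>R resolvent C x - x"

definition proj :: "'a::real_inner set \<Rightarrow> 'a \<Rightarrow> 'a" where
  "proj S x = (THE p. p \<in> S \<and> (\<forall>y\<in>S. dist x p \<le> dist x y))"

definition fixset :: "'a::real_vector \<Rightarrow> ('a \<Rightarrow> 'a) \<Rightarrow> 'a set" where
  "fixset v T = {y. y = v + T y}"

definition fejer_monotone :: "'a::real_normed_vector set \<Rightarrow> (nat \<Rightarrow> 'a) \<Rightarrow> bool" where
  "fejer_monotone C s \<longleftrightarrow> C \<noteq> {} \<and>
     (\<forall>c\<in>C. \<forall>n. norm (s (Suc n) - c) \<le> norm (s n - c))"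

definition set_sum :: "'a::ab_group_add set \<Rightarrow> 'a set \<Rightarrow> 'a set" where
  "set_sum S T = {s + t | s t. s \<in> S \<and> t \<in> T}"

definition set_diff :: "'a::ab_group_add set \<Rightarrow> 'a set \<Rightarrow> 'a set" where
  "set_diff S T = {s - t | s t. s \<in> S \<and> t \<in> T}"

definition op_vee :: "('a::ab_group_add \<Rightarrow> 'a set) \<Rightarrow> 'a \<Rightarrow> 'a set" where
  "op_vee M k = uminus ` op_inv M (- k)"

definition solS :: "('a::real_inner \<Rightarrow> 'a set) \<Rightarrow> ('a \<Rightarrow> 'a set) \<Rightarrow> 'a \<Rightarrow> ('a \<times> 'a) set" where
  "solS A B v = {(z, k). - k \<in> B (z - v) \<and> k \<in> (\<lambda>u. - v + u) ` A z}"

definition solZ :: "('a::real_inner \<Rightarrow> 'a set) \<Rightarrow> ('a \<Rightarrow> 'a set) \<Rightarrow> 'a \<Rightarrow> 'a set" where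
  "solZ A B v = {x. 0 \<in> set_sum ((\<lambda>u. - v + u) ` A x) (B (x - v))}"

definition solK :: "('a::real_inner \<Rightarrow> 'a set) \<Rightarrow> ('a \<Rightarrow> 'a set) \<Rightarrow> 'a \<Rightarrow> 'a set" where
  "solK A B v = {k. 0 \<in> set_sum (op_inv (\<lambda>x. (\<lambda>u. - v + u) ` A x) k)
                                 (op_vee (\<lambda>y. B (y - v)) k)}"

end

theory Submission
  imports Defs
begin

definition mm :: "('a::real_inner \<Rightarrow> 'a set) \<Rightarrow> bool" where
  "mm A \<longleftrightarrow> monotone_op A \<and>
     (\<forall>x u. (\<forall>y w. w \<in> A y \<longrightarrow> 0 \<le> inner (x - y) (u - w)) \<longrightarrow> u \<in> A x)"

lemma monoD: "monotone_op A \<Longrightarrow> u \<in> A x \<Longrightarrow> w \<in> A y \<Longrightarrow> 0 \<le> inner (x - y) (u - w)"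
  unfolding monotone_op_def by blast

lemma mmD: "mm A \<Longrightarrow> (\<And>y w. w \<in> A y \<Longrightarrow> 0 \<le> inner (x - y) (u - w)) \<Longrightarrow> u \<in> A x"
  unfolding mm_def by blast

lemma mm_mono: "mm A \<Longrightarrow> monotone_op A"
  unfolding mm_def by blast

lemma max_monotone_mm:
  assumes "max_monotone A" shows "mm A"
  unfolding mm_def
proof (intro conjI allI impI)
  show "monotone_op A" using assms unfolding max_monotone_def by blast
  fix x u assume H: "\<forall>y w. w \<in> A y \<longrightarrow> 0 \<le> inner (x - y) (u - w)"
  define B where "B = A(x := insert u (A x))"
  have mA: "monotone_op A" using assms unfolding max_monotone_def by blast
  have "monotone_op B"
    unfolding monotone_op_def
  proof (intro allI impI)
    fix x1 y1 u1 w1 assume a: "u1 \<in> B x1" "w1 \<in> B y1"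
    show "0 \<le> inner (x1 - y1) (u1 - w1)"
    proof (cases "x1 = x \<and> u1 = u")
      case True
      then show ?thesis
      proof (cases "y1 = x \<and> w1 = u")
        case True then show ?thesis using \<open>x1 = x \<and> u1 = u\<close> by simp
      next
        case False
        then have "w1 \<in> A y1" using a(2) unfolding B_def by (auto split: if_splits)
        then show ?thesis using H True by auto
      qed
    next
      case False
      then have u1A: "u1 \<in> A x1" using a(1) unfolding B_def by (auto split: if_splits)
      show ?thesis
      proof (cases "y1 = x \<and> w1 = u")
        case True
        have "0 \<le> inner (x - x1) (u - u1)" using H u1A by auto
        also have "inner (x - x1) (u - u1) = inner (x1 - y1) (u1 - w1)"
          using True by (simp add: inner_diff_left inner_diff_right)
        finally show ?thesis .
      next
        case False
        then have "w1 \<in> A y1" using a(2) unfolding B_def by (auto split: if_splits)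
        then show ?thesis using mA u1A monoD by blast
      qed
    qed
  qed
  moreover have "\<forall>z. A z \<subseteq> B z" unfolding B_def by auto
  ultimately have "B = A" using assms unfolding max_monotone_def by blast
  then show "u \<in> A x" unfolding B_def by (metis fun_upd_same insertI1)
qed

lemma mm_max_monotone:
  assumes "mm A" shows "max_monotone A"
  unfolding max_monotone_def
proof (intro conjI allI impI)
  show "monotone_op A" using assms mm_mono by blast
  fix B assume B: "monotone_op B \<and> (\<forall>x. A x \<subseteq> B x)"
  show "B = A"
  proof
    fix x show "B x = A x"
    proof
      show "B x \<subseteq> A x"
      proof
        fix u assume u: "u \<in> B x"
        show "u \<in> A x"
          by (rule mmD[OF assms]) (use B u monoD in blast)
      qed
    qed (use B in blast)
  qed
qed

lemma norm_add_sq: "norm (a + b)^2 = norm a ^2 + 2 * inner a b + norm (b::'a::real_inner)^2"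
  by (simp add: power2_norm_eq_inner inner_add_left inner_add_right inner_commute)

lemma norm_diff_sq: "norm (a - b)^2 = norm a ^2 - 2 * inner a b + norm (b::'a::real_inner)^2"
  by (simp add: power2_norm_eq_inner inner_diff_left inner_diff_right inner_commute)

lemma mid_sq: "norm ((1/2) *\<^sub>R (a + b))^2 = (norm a ^2 + norm b^2)/2 - norm (a - b)^2/4"
  for a b :: "'a::real_inner"
  by (simp add: power2_norm_eq_inner inner_add_left inner_add_right inner_diff_left
      inner_diff_right inner_commute field_simps)

lemma lin_nonneg:
  fixes L Q :: real
  assumes "\<And>t. 0 < t \<Longrightarrow> t \<le> 1 \<Longrightarrow> 0 \<le> L + t * Q" "0 \<le> Q"
  shows "0 \<le> L"
proof (rule ccontr)
  assume "\<not> 0 \<le> L"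
  define t where "t = min 1 (- L / (Q + 1))"
  have "0 < - L / (Q + 1)" using \<open>\<not> 0 \<le> L\<close> assms(2) by (intro divide_pos_pos) auto
  then have t0: "0 < t" unfolding t_def by auto
  have t1: "t \<le> 1" unfolding t_def by auto
  have "t * Q \<le> (- L / (Q + 1)) * Q" using assms(2) unfolding t_def
    by (intro mult_right_mono) auto
  also have "\<dots> = (- L) * Q / (Q + 1)" by simp
  also have "\<dots> < - L"
  proof -
    have "(- L) * Q < (- L) * (Q + 1)" using \<open>\<not> 0 \<le> L\<close> by simp
    moreover have "0 < Q + 1" using assms(2) by simp
    ultimately show ?thesis by (simp add: pos_divide_less_eq pos_less_divide_eq)
  qed
  finally show False using assms(1)[OF t0 t1] by linarith
qed

lemma cauchy_from_bound:
  fixes s :: "nat \<Rightarrow> 'a::real_normed_vector"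
  assumes K: "0 \<le> K" and b: "\<And>i j. norm (s i - s j)^2 \<le> K * (1/(real i+1) + 1/(real j+1))"
  shows "Cauchy s"
proof (rule metric_CauchyI)
  fix e :: real assume e: "0 < e"
  obtain M :: nat where M: "real M > 2 * K / e^2" using reals_Archimedean2 by blast
  show "\<exists>M. \<forall>m\<ge>M. \<forall>n\<ge>M. dist (s m) (s n) < e"
  proof (intro exI allI impI)
    fix m n assume mn: "M \<le> m" "M \<le> n"
    have "1/(real m+1) \<le> 1/(real M+1)" using mn by (simp add: frac_le)
    moreover have "1/(real n+1) \<le> 1/(real M+1)" using mn by (simp add: frac_le)
    moreover have e2: "2/(real M+1) = 1/(real M+1) + 1/(real M+1)"
      by (simp add: field_simps)
    ultimately have "1/(real m+1) + 1/(real n+1) \<le> 2/(real M+1)" by linarith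
    then have "K * (1/(real m+1) + 1/(real n+1)) \<le> K * (2/(real M+1))"
      using K by (rule mult_left_mono)
    then have "norm (s m - s n)^2 \<le> K * (2/(real M+1))"
      using b[of m n] by linarith
    also have "\<dots> < e^2"
    proof -
      have e2p: "0 < e^2" using e by simp
      have "2 * K < real M * e^2" using M e2p by (simp add: pos_divide_less_eq)
      also have "\<dots> \<le> (real M + 1) * e^2" using e2p by simp
      finally have "2 * K < (real M + 1) * e^2" .
      then have "2 * K / (real M + 1) < e^2" by (simp add: pos_divide_less_eq mult.commute)
      then show ?thesis by (simp add: mult.commute)
    qed
    finally have "norm (s m - s n)^2 < e^2" .
    then have "norm (s m - s n) < e" using e by (simp add: power_less_imp_less_base)
    then show "dist (s m) (s n) < e" by (simp add: dist_norm)
  qed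
qed

lemma norm_comb_sq:
  fixes a b :: "'a::real_inner"
  shows "norm ((1-t) *\<^sub>R a + t *\<^sub>R b)^2 = norm a^2 + 2*t*inner a (b - a) + t^2 * norm (b - a)^2"
proof -
  have "(1-t) *\<^sub>R a + t *\<^sub>R b = a + t *\<^sub>R (b - a)" by (simp add: algebra_simps)
  then show ?thesis by (simp add: norm_add_sq power_mult_distrib)
qed

lemma inner_neg_neg: "inner (- a - b) (- c - d) = inner (a + b) (c + (d::'a::real_inner))"
proof -
  have "- a - b = - (a + b)" "- c - d = - (c + d)" by simp_all
  then show ?thesis by (simp only: inner_minus_left inner_minus_right minus_minus)
qed

lemma minty0:
  fixes M :: "'a::{real_inner,complete_space} \<Rightarrow> 'a set"
  assumes mM: "mm M"
  shows "\<exists>p. - p \<in> M p"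
proof -
  have mono: "monotone_op M" using mM mm_mono by blast
  define E :: "('a \<times> 'a \<times> real) set" where
    "E = {(x,u,c). \<forall>y w. w \<in> M y \<longrightarrow> inner x w + inner y u - inner y w \<le> c}"
  define H :: "'a \<times> 'a \<times> real \<Rightarrow> real" where
    "H = (\<lambda>(x,u,c). c + (norm x ^ 2 + norm u ^ 2)/2)"
  have Ei: "inner x w + inner y u - inner y w \<le> c" if "(x,u,c) \<in> E" "w \<in> M y" for x u c y w
    using that unfolding E_def by auto
  have lowc: "inner x u \<le> c" if "(x,u,c) \<in> E" for x u c
  proof (rule ccontr)
    assume nc: "\<not> inner x u \<le> c"
    have "u \<in> M x"
    proof (rule mmD[OF mM])
      fix y w assume "w \<in> M y"
      then have "inner x w + inner y u - inner y w \<le> c" using Ei that by blast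
      then show "0 \<le> inner (x - y) (u - w)" using nc
        by (simp add: inner_diff_left inner_diff_right)
    qed
    then have "inner x u + inner x u - inner x u \<le> c" using Ei that by blast
    then show False using nc by simp
  qed
  have Hnn: "0 \<le> H (x,u,c)" if "(x,u,c) \<in> E" for x u c
  proof -
    have "inner x u \<le> c" using lowc that by blast
    moreover have "0 \<le> norm (x+u)^2" by simp
    ultimately have "0 \<le> c + (norm x^2 + norm u^2)/2" using norm_add_sq[of x u] by (simp add: add_divide_distrib)
    then show ?thesis unfolding H_def by simp
  qed
  obtain y0 w0 where y0: "w0 \<in> M y0"
  proof -
    { assume nn: "\<forall>y w. w \<notin> M y"
      then have "(0::'a) \<in> M 0" by (intro mmD[OF mM]) auto
      then have False using nn by blast }
    then show ?thesis using that by blast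
  qed
  have y0E: "(y0, w0, inner y0 w0) \<in> E" if "w0 \<in> M y0" for y0 w0
    unfolding E_def
  proof (clarsimp)
    fix y w assume "w \<in> M y"
    then have "0 \<le> inner (y0 - y) (w0 - w)" using monoD[OF mono that] by blast
    then show "inner y0 w + inner y w0 - inner y w \<le> inner y0 w0"
      by (simp add: inner_diff_left inner_diff_right inner_commute)
  qed
  have convE: "((1-t) *\<^sub>R x1 + t *\<^sub>R x2, (1-t) *\<^sub>R u1 + t *\<^sub>R u2, (1-t)*c1 + t*c2) \<in> E"
    if e1: "(x1,u1,c1) \<in> E" and e2: "(x2,u2,c2) \<in> E" and t: "0 \<le> t" "t \<le> 1"
    for x1 u1 c1 x2 u2 c2 t
    unfolding E_def
  proof (clarsimp)
    fix y w assume w: "w \<in> M y"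
    have i1: "inner x1 w + inner y u1 - inner y w \<le> c1" using Ei[OF e1 w] .
    have i2: "inner x2 w + inner y u2 - inner y w \<le> c2" using Ei[OF e2 w] .
    have j1: "(1-t) * (inner x1 w + inner y u1 - inner y w) \<le> (1-t)*c1"
      using i1 t by (intro mult_left_mono) auto
    have j2: "t * (inner x2 w + inner y u2 - inner y w) \<le> t*c2"
      using i2 t by (intro mult_left_mono) auto
    have eq: "inner ((1-t) *\<^sub>R x1 + t *\<^sub>R x2) w + inner y ((1-t) *\<^sub>R u1 + t *\<^sub>R u2) - inner y w
       = (1-t) * (inner x1 w + inner y u1 - inner y w) + t * (inner x2 w + inner y u2 - inner y w)"
      by (simp add: inner_add_left inner_add_right algebra_simps)
    show "inner ((1-t) *\<^sub>R x1 + t *\<^sub>R x2) w + inner y ((1-t) *\<^sub>R u1 + t *\<^sub>R u2) - inner y w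
       \<le> (1-t)*c1 + t*c2" using eq j1 j2 by linarith
  qed
  define m where "m = Inf (H ` E)"
  have Ene: "E \<noteq> {}" using y0E[OF y0] by blast
  have bdd: "bdd_below (H ` E)"
    by (rule bdd_belowI[where m=0]) (use Hnn in auto)
  have mle: "m \<le> H e" if "e \<in> E" for e
    unfolding m_def using bdd that by (intro cInf_lower) auto
  have "\<exists>e\<in>E. H e < m + 1/(real k+1)" for k :: nat
  proof -
    have "Inf (H ` E) < m + 1/(real k+1)" unfolding m_def by simp
    then obtain h where "h \<in> H ` E" "h < m + 1/(real k+1)"
      using cInf_lessD[of "H ` E"] Ene by blast
    then show ?thesis by blast
  qed
  then obtain s where sE: "\<And>k. s k \<in> E" and sH: "\<And>k. H (s k) < m + 1/(real k+1)" by metis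
  define xs where "xs = (\<lambda>k. fst (s k))"
  define us where "us = (\<lambda>k. fst (snd (s k)))"
  define cs where "cs = (\<lambda>k. snd (snd (s k)))"
  have s_eq: "s k = (xs k, us k, cs k)" for k unfolding xs_def us_def cs_def by simp
  have sE': "(xs k, us k, cs k) \<in> E" for k using sE[of k] s_eq[of k] by simp
  have Hs: "H (s k) = cs k + (norm (xs k)^2 + norm (us k)^2)/2" for k
    unfolding s_eq H_def by simp
  have bound: "norm (xs i - xs j)^2 + norm (us i - us j)^2 \<le> 4 * (1/(real i+1) + 1/(real j+1))" for i j
  proof -
    have mid: "((1-1/2) *\<^sub>R xs i + (1/2) *\<^sub>R xs j, (1-1/2) *\<^sub>R us i + (1/2) *\<^sub>R us j,
        (1-1/2)*cs i + (1/2)*cs j) \<in> E"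
      by (rule convE[OF sE' sE']) auto
    have "m \<le> H ((1-1/2) *\<^sub>R xs i + (1/2) *\<^sub>R xs j, (1-1/2) *\<^sub>R us i + (1/2) *\<^sub>R us j,
        (1-1/2)*cs i + (1/2)*cs j)" using mle[OF mid] .
    also have "\<dots> = (cs i + cs j)/2 + (norm ((1/2) *\<^sub>R (xs i + xs j))^2
        + norm ((1/2) *\<^sub>R (us i + us j))^2)/2"
      unfolding H_def by (simp add: scaleR_add_right)
    also have "\<dots> = (H (s i) + H (s j))/2 - (norm (xs i - xs j)^2 + norm (us i - us j)^2)/8"
      unfolding Hs mid_sq by (simp add: field_simps)
    finally have "norm (xs i - xs j)^2 + norm (us i - us j)^2 \<le> 4 * (H (s i) + H (s j) - 2*m)"
      by (simp add: field_simps)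
    also have "\<dots> \<le> 4 * (1/(real i+1) + 1/(real j+1))"
      using sH[of i] sH[of j] by simp
    finally show ?thesis .
  qed
  have bx: "norm (xs i - xs j)^2 \<le> 4 * (1/(real i+1) + 1/(real j+1))" for i j
    using bound[of i j] zero_le_power2[of "norm (us i - us j)"] by linarith
  have bu: "norm (us i - us j)^2 \<le> 4 * (1/(real i+1) + 1/(real j+1))" for i j
    using bound[of i j] zero_le_power2[of "norm (xs i - xs j)"] by linarith
  have cx: "Cauchy xs"
    by (rule cauchy_from_bound[where K=4, OF _ bx]) simp
  have cu: "Cauchy us"
    by (rule cauchy_from_bound[where K=4, OF _ bu]) simp
  obtain x0 where x0: "xs \<longlonglongrightarrow> x0" using cx Cauchy_convergent_iff convergent_def by blast
  obtain u0 where u0: "us \<longlonglongrightarrow> u0" using cu Cauchy_convergent_iff convergent_def by blast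
  have Hlim: "(\<lambda>k. H (s k)) \<longlonglongrightarrow> m"
  proof (rule tendsto_sandwich[where f="\<lambda>k. m" and h="\<lambda>k. m + 1/(real k+1)"])
    show "\<forall>\<^sub>F k in sequentially. m \<le> H (s k)" using mle sE by auto
    show "\<forall>\<^sub>F k in sequentially. H (s k) \<le> m + 1/(real k+1)" using sH by (intro always_eventually allI less_imp_le)
    show "(\<lambda>k. m) \<longlonglongrightarrow> m" by simp
    have "(\<lambda>k. 1/(real k+1)) \<longlonglongrightarrow> 0"
      using LIMSEQ_inverse_real_of_nat by (simp add: inverse_eq_divide add.commute)
    then show "(\<lambda>k. m + 1/(real k+1)) \<longlonglongrightarrow> m" using tendsto_add[of "\<lambda>k. m" m] by force
  qed
  define c0 where "c0 = m - (norm x0^2 + norm u0^2)/2"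
  have cs_eq: "cs k = H (s k) - (norm (xs k)^2 + norm (us k)^2)/2" for k using Hs[of k] by simp
  have c0lim: "cs \<longlonglongrightarrow> c0"
    unfolding c0_def
    apply (subst cs_eq[abs_def])
    by (intro tendsto_intros Hlim x0 u0) simp_all
  have x0E: "(x0, u0, c0) \<in> E"
    unfolding E_def
  proof (clarsimp)
    fix y w assume w: "w \<in> M y"
    have "(\<lambda>k. inner (xs k) w + inner y (us k) - inner y w) \<longlonglongrightarrow> inner x0 w + inner y u0 - inner y w"
      by (intro tendsto_intros x0 u0)
    moreover have "\<forall>k. inner (xs k) w + inner y (us k) - inner y w \<le> cs k"
      using Ei[OF sE' w] by blast
    ultimately show "inner x0 w + inner y u0 - inner y w \<le> c0"
      using c0lim by (intro LIMSEQ_le) auto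
  qed
  have H0: "H (x0, u0, c0) = m" unfolding H_def c0_def by simp
  have key: "norm (x0 + u0)^2 \<le> inner (u0 + y) (x0 + w)" if w: "w \<in> M y" for y w
  proof -
    define L where "L = inner y w - c0 + inner x0 (y - x0) + inner u0 (w - u0)"
    define Q where "Q = (norm (y - x0)^2 + norm (w - u0)^2)/2"
    have hLQ: "0 \<le> L + t * Q" if t: "0 < t" "t \<le> 1" for t
    proof -
      have eE: "((1-t) *\<^sub>R x0 + t *\<^sub>R y, (1-t) *\<^sub>R u0 + t *\<^sub>R w, (1-t)*c0 + t*inner y w) \<in> E"
        by (rule convE[OF x0E y0E[OF w]]) (use t in auto)
      have "m \<le> H ((1-t) *\<^sub>R x0 + t *\<^sub>R y, (1-t) *\<^sub>R u0 + t *\<^sub>R w, (1-t)*c0 + t*inner y w)"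
        using mle[OF eE] .
      also have "\<dots> = (1-t)*c0 + t*inner y w + (norm ((1-t) *\<^sub>R x0 + t *\<^sub>R y)^2
          + norm ((1-t) *\<^sub>R u0 + t *\<^sub>R w)^2)/2"
        unfolding H_def by simp
      also have "\<dots> = m + t * (L + t * Q)"
        unfolding norm_comb_sq L_def Q_def c0_def
        by (simp add: field_simps power2_eq_square)
      finally have "0 \<le> t * (L + t * Q)" by simp
      then show ?thesis using t by (simp add: zero_le_mult_iff)
    qed
    have Q0: "0 \<le> Q" unfolding Q_def by simp
    have L0: "0 \<le> L" by (rule lin_nonneg[OF hLQ Q0])
    have cx0: "inner x0 u0 \<le> c0" using lowc[OF x0E] .
    have e1: "inner (u0 + y) (x0 + w) = inner u0 x0 + inner u0 w + inner y x0 + inner y w"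
      by (simp add: inner_add_left inner_add_right)
    have e2: "norm (x0 + u0)^2 = norm x0^2 + 2 * inner x0 u0 + norm u0^2" by (rule norm_add_sq)
    have e3: "L = inner y w - c0 + inner x0 y - norm x0^2 + inner u0 w - norm u0^2"
      unfolding L_def by (simp add: inner_diff_right power2_norm_eq_inner)
    have e4: "inner u0 x0 = inner x0 u0" "inner y x0 = inner x0 y" by (rule inner_commute)+
    show ?thesis using e1 e2 e3 e4 L0 cx0 by linarith
  qed
  have "- x0 \<in> M (- u0)"
  proof (rule mmD[OF mM])
    fix y w assume "w \<in> M y"
    then have k: "norm (x0 + u0)^2 \<le> inner (u0 + y) (x0 + w)" by (rule key)
    have "inner (- u0 - y) (- x0 - w) = inner (u0 + y) (x0 + w)"
      by (rule inner_neg_neg)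
    moreover have "0 \<le> norm (x0 + u0)^2" by simp
    ultimately show "0 \<le> inner (- u0 - y) (- x0 - w)" using k by linarith
  qed
  have "norm (x0 + u0)^2 \<le> 0"
    using key[OF \<open>- x0 \<in> M (- u0)\<close>] by simp
  then have "x0 + u0 = 0" by simp
  then have "u0 = - x0" by (simp only: add_eq_0_iff)
  then have "- x0 \<in> M x0" using \<open>- x0 \<in> M (- u0)\<close> by simp
  then show ?thesis by blast
qed

lemma mm_shift:
  assumes "mm M"
  shows "mm (\<lambda>x. (\<lambda>w. w - z) ` M x)"
  unfolding mm_def
proof (intro conjI allI impI)
  show "monotone_op (\<lambda>x. (\<lambda>w. w - z) ` M x)"
    unfolding monotone_op_def using monoD[OF mm_mono[OF assms]] by auto
  fix x u assume H: "\<forall>y w. w \<in> (\<lambda>w. w - z) ` M y \<longrightarrow> 0 \<le> inner (x - y) (u - w)"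
  have "u + z \<in> M x"
  proof (rule mmD[OF assms])
    fix y w assume "w \<in> M y"
    then have "w - z \<in> (\<lambda>w. w - z) ` M y" by blast
    then have "0 \<le> inner (x - y) (u - (w - z))" using H by blast
    then show "0 \<le> inner (x - y) (u + z - w)" by (simp add: algebra_simps)
  qed
  then show "u \<in> (\<lambda>w. w - z) ` M x" by (metis add_diff_cancel image_eqI)
qed

lemma minty:
  fixes M :: "'a::{real_inner,complete_space} \<Rightarrow> 'a set"
  assumes "mm M"
  shows "\<exists>p. z - p \<in> M p"
proof -
  obtain p where "- p \<in> (\<lambda>w. w - z) ` M p" using minty0[OF mm_shift[OF assms]] by blast
  then obtain w where "w \<in> M p" "- p = w - z" by blast
  then have "z - p \<in> M p" by (metis add.commute diff_add_cancel uminus_add_conv_diff)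
  then show ?thesis by blast
qed

lemma resolvent_unique:
  assumes "mm M" "z - p \<in> M p" "z - q \<in> M q"
  shows "p = q"
proof -
  have "0 \<le> inner (p - q) ((z - p) - (z - q))" using monoD[OF mm_mono[OF assms(1)] assms(2,3)] .
  also have "inner (p - q) ((z - p) - (z - q)) = - (norm (p - q) ^ 2)"
    by (simp add: power2_norm_eq_inner inner_diff_left inner_diff_right inner_commute)
  finally show ?thesis by simp
qed

lemma resolvent_in:
  fixes M :: "'a::{real_inner,complete_space} \<Rightarrow> 'a set"
  assumes "mm M"
  shows "z - resolvent M z \<in> M (resolvent M z)"
proof -
  obtain p where p: "z - p \<in> M p" using minty[OF assms] by blast
  have "z - (THE p. z - p \<in> M p) \<in> M (THE p. z - p \<in> M p)"
    by (rule theI[of _ p]) (use p resolvent_unique[OF assms] in blast)+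
  then show ?thesis unfolding resolvent_def .
qed

lemma resolvent_eq:
  fixes M :: "'a::{real_inner,complete_space} \<Rightarrow> 'a set"
  assumes "mm M" "z - p \<in> M p"
  shows "resolvent M z = p"
  using resolvent_unique[OF assms(1) resolvent_in[OF assms(1)] assms(2)] .

lemma mm_inv:
  assumes "mm M" shows "mm (op_inv M)"
  unfolding mm_def op_inv_def
proof (intro conjI allI impI)
  show "monotone_op (\<lambda>u. {x. u \<in> M x})"
    unfolding monotone_op_def
  proof (clarsimp)
    fix x y u w assume "x \<in> M u" "y \<in> M w"
    then have "0 \<le> inner (u - w) (x - y)" using monoD[OF mm_mono[OF assms]] by blast
    then show "0 \<le> inner (x - y) (u - w)" by (simp add: inner_commute)
  qed
  fix x u assume H: "\<forall>y w. w \<in> {x. y \<in> M x} \<longrightarrow> 0 \<le> inner (x - y) (u - w)"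
  have "x \<in> M u"
  proof (rule mmD[OF assms])
    fix y w assume "w \<in> M y"
    then have "0 \<le> inner (x - w) (u - y)" using H by blast
    then show "0 \<le> inner (u - y) (x - w)" by (simp add: inner_commute)
  qed
  then show "u \<in> {xa. x \<in> M xa}" by simp
qed

lemma resolvent_inv:
  fixes M :: "'a::{real_inner,complete_space} \<Rightarrow> 'a set"
  assumes "mm M"
  shows "resolvent (op_inv M) z = z - resolvent M z"
proof (rule resolvent_eq[OF mm_inv[OF assms]])
  show "z - (z - resolvent M z) \<in> op_inv M (z - resolvent M z)"
    using resolvent_in[OF assms, of z] unfolding op_inv_def by simp
qed

lemma mm_scale:
  assumes "mm M" "0 < l"
  shows "mm (\<lambda>x. (\<lambda>w. l *\<^sub>R w) ` M x)"
  unfolding mm_def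
proof (intro conjI allI impI)
  show "monotone_op (\<lambda>x. (\<lambda>w. l *\<^sub>R w) ` M x)"
    unfolding monotone_op_def
  proof (clarsimp)
    fix x y u w assume "u \<in> M x" "w \<in> M y"
    then have "0 \<le> inner (x - y) (u - w)" using monoD[OF mm_mono[OF assms(1)]] by blast
    then have "0 \<le> l * inner (x - y) (u - w)" using assms(2) by simp
    then show "0 \<le> inner (x - y) (l *\<^sub>R u - l *\<^sub>R w)"
      by (simp add: scaleR_diff_right[symmetric])
  qed
  fix x u assume H: "\<forall>y w. w \<in> (\<lambda>w. l *\<^sub>R w) ` M y \<longrightarrow> 0 \<le> inner (x - y) (u - w)"
  have "(1/l) *\<^sub>R u \<in> M x"
  proof (rule mmD[OF assms(1)])
    fix y w assume "w \<in> M y"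
    then have "0 \<le> inner (x - y) (u - l *\<^sub>R w)" using H by blast
    then have "0 \<le> (1/l) * inner (x - y) (u - l *\<^sub>R w)" using assms(2) by simp
    also have "(1/l) * inner (x - y) (u - l *\<^sub>R w) = inner (x - y) ((1/l) *\<^sub>R u - w)"
      using assms(2) by (simp add: inner_diff_right field_simps)
    finally show "0 \<le> inner (x - y) ((1/l) *\<^sub>R u - w)" .
  qed
  moreover have "u = l *\<^sub>R ((1/l) *\<^sub>R u)" using assms(2) by simp
  ultimately show "u \<in> (\<lambda>w. l *\<^sub>R w) ` M x" by blast
qed

lemma minty_scaled:
  fixes M :: "'a::{real_inner,complete_space} \<Rightarrow> 'a set"
  assumes "mm M" "0 < l"
  shows "\<exists>p w. w \<in> M p \<and> z - p = l *\<^sub>R w"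
proof -
  obtain p where "z - p \<in> (\<lambda>w. l *\<^sub>R w) ` M p" using minty[OF mm_scale[OF assms]] by blast
  then show ?thesis by blast
qed

lemma comb_id: "(1 - u) * a + u * a = (a::real)"
  by (simp add: algebra_simps)

lemma closure_convex_from_combos:
  fixes S :: "'a::real_normed_vector set"
  assumes H: "\<And>x y u. x \<in> S \<Longrightarrow> y \<in> S \<Longrightarrow> 0 \<le> u \<Longrightarrow> u \<le> 1 \<Longrightarrow> (1 - u) *\<^sub>R x + u *\<^sub>R y \<in> closure S"
  shows "convex (closure S)"
  unfolding convex_alt
proof (intro ballI allI impI)
  fix x y and u :: real assume x: "x \<in> closure S" and y: "y \<in> closure S" and u: "0 \<le> u \<and> u \<le> 1"
  show "(1 - u) *\<^sub>R x + u *\<^sub>R y \<in> closure S"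
    unfolding closure_approachable
  proof (intro allI impI)
    fix e :: real assume e: "0 < e"
    obtain x' where x': "x' \<in> S" "dist x' x < e/3" using x e unfolding closure_approachable
      by (meson divide_pos_pos zero_less_numeral)
    obtain y' where y': "y' \<in> S" "dist y' y < e/3" using y e unfolding closure_approachable
      by (meson divide_pos_pos zero_less_numeral)
    have c: "(1 - u) *\<^sub>R x' + u *\<^sub>R y' \<in> closure S" using H x'(1) y'(1) u by blast
    obtain z where z: "z \<in> S" "dist z ((1 - u) *\<^sub>R x' + u *\<^sub>R y') < e/3"
      using c e unfolding closure_approachable by (meson divide_pos_pos zero_less_numeral)
    have "dist ((1 - u) *\<^sub>R x' + u *\<^sub>R y') ((1 - u) *\<^sub>R x + u *\<^sub>R y)
        = norm ((1 - u) *\<^sub>R (x' - x) + u *\<^sub>R (y' - y))"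
      by (simp add: dist_norm algebra_simps)
    also have "\<dots> \<le> norm ((1 - u) *\<^sub>R (x' - x)) + norm (u *\<^sub>R (y' - y))"
      by (rule norm_triangle_ineq)
    also have "\<dots> = (1 - u) * norm (x' - x) + u * norm (y' - y)"
      using u by simp
    also have "\<dots> \<le> (1 - u) * (e/3) + u * (e/3)"
      using x'(2) y'(2) u unfolding dist_norm
      by (intro add_mono mult_left_mono) auto
    also have "\<dots> = e/3" using comb_id[of u "e/3"] .
    finally have "dist ((1 - u) *\<^sub>R x' + u *\<^sub>R y') ((1 - u) *\<^sub>R x + u *\<^sub>R y) \<le> e/3" .
    then have "dist z ((1 - u) *\<^sub>R x + u *\<^sub>R y) < e"
      using z(2) dist_triangle[of z "(1 - u) *\<^sub>R x + u *\<^sub>R y" "(1 - u) *\<^sub>R x' + u *\<^sub>R y'"]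
      using e by linarith
    then show "\<exists>z\<in>S. dist z ((1 - u) *\<^sub>R x + u *\<^sub>R y) < e" using z(1) by blast
  qed
qed

lemma small_delta:
  fixes e Y W d l :: real
  assumes e: "0 < e" and Y: "0 \<le> Y" and W: "0 < W" and d: "0 \<le> d"
    and l: "l = e^2 / (2 * W * (Y + 2 * e))"
    and ineq: "d^2 \<le> l * W * (Y + 2 * d)"
  shows "d < e"
proof (rule ccontr)
  assume "\<not> d < e"
  then have de: "e \<le> d" by simp
  have pos: "0 < Y + 2 * e" using Y e by simp
  have X: "2 * W * (Y + 2 * e) \<noteq> 0" using W pos by simp
  have lX: "l * (2 * W * (Y + 2 * e)) = e^2" unfolding l using X by simp
  have k: "2 * (l * W * (Y + 2 * e)) = e^2" using lX by (simp add: algebra_simps)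
  have l0: "0 \<le> l" unfolding l using W pos by simp
  have lW0: "0 \<le> l * W" using l0 W by simp
  have d0: "0 < d" using de e by simp
  have s1: "e * d^2 \<le> e * (l * W * (Y + 2 * d))" using ineq e by (simp add: mult_left_mono)
  have s2: "e * (l * W * (Y + 2 * d)) = (l * W) * (e * Y + 2 * e * d)" by (simp add: algebra_simps)
  have eY: "e * Y \<le> d * Y" using de Y by (rule mult_right_mono)
  have s3: "(l * W) * (e * Y + 2 * e * d) \<le> (l * W) * (d * Y + 2 * e * d)"
    using eY lW0 by (intro mult_left_mono) auto
  have s4: "(l * W) * (d * Y + 2 * e * d) = d * (l * W * (Y + 2 * e))" by (simp add: algebra_simps)
  have "e * d^2 \<le> d * (l * W * (Y + 2 * e))" using s1 s2 s3 s4 by linarith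
  then have "2 * (e * d^2) \<le> 2 * (d * (l * W * (Y + 2 * e)))" by simp
  also have "\<dots> = d * (2 * (l * W * (Y + 2 * e)))" by simp
  also have "\<dots> = d * e^2" using k by simp
  finally have "2 * (e * d^2) \<le> d * e^2" .
  then have "(e * d) * (2 * d) \<le> (e * d) * e" by (simp add: power2_eq_square algebra_simps)
  then have "2 * d \<le> e" using e d0 by (simp add: mult_le_cancel_left_pos)
  then show False using de e by linarith
qed

lemma dom_closure_convex:
  fixes M :: "'a::{real_inner,complete_space} \<Rightarrow> 'a set"
  assumes mM: "mm M"
  shows "convex (closure (op_dom M))"
proof (rule closure_convex_from_combos)
  fix y1 y2 and u :: real
  assume y1: "y1 \<in> op_dom M" and y2: "y2 \<in> op_dom M" and u: "0 \<le> u" "u \<le> 1"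
  obtain w1 where w1: "w1 \<in> M y1" using y1 unfolding op_dom_def by blast
  obtain w2 where w2: "w2 \<in> M y2" using y2 unfolding op_dom_def by blast
  define z where "z = (1 - u) *\<^sub>R y1 + u *\<^sub>R y2"
  define W where "W = norm w1 + norm w2 + 1"
  define Y where "Y = norm (y1 - z) + norm (y2 - z)"
  show "z \<in> closure (op_dom M)"
    unfolding closure_approachable
  proof (intro allI impI)
    fix e :: real assume e: "0 < e"
    have W0: "0 < W" unfolding W_def using norm_ge_zero[of w1] norm_ge_zero[of w2] by linarith
    have Y0: "0 \<le> Y" unfolding Y_def by simp
    define l where "l = e^2 / (2 * W * (Y + 2 * e))"
    have l0: "0 < l" unfolding l_def using e W0 Y0 by simp
    obtain p w where pw: "w \<in> M p" "z - p = l *\<^sub>R w" using minty_scaled[OF mM l0] by blast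
    have i1: "l * inner (p - y1) w1 \<le> inner (p - y1) (z - p)"
    proof -
      have "inner (p - y1) w1 \<le> inner (p - y1) w"
        using monoD[OF mm_mono[OF mM] pw(1) w1] by (simp add: inner_diff_right)
      then have "l * inner (p - y1) w1 \<le> l * inner (p - y1) w" using l0 by (simp add: mult_left_mono)
      also have "l * inner (p - y1) w = inner (p - y1) (z - p)" using pw(2) by simp
      finally show ?thesis .
    qed
    have i2: "l * inner (p - y2) w2 \<le> inner (p - y2) (z - p)"
    proof -
      have "inner (p - y2) w2 \<le> inner (p - y2) w"
        using monoD[OF mm_mono[OF mM] pw(1) w2] by (simp add: inner_diff_right)
      then have "l * inner (p - y2) w2 \<le> l * inner (p - y2) w" using l0 by (simp add: mult_left_mono)
      also have "l * inner (p - y2) w = inner (p - y2) (z - p)" using pw(2) by simp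
      finally show ?thesis .
    qed
    have comb: "(1 - u) * inner (p - y1) (z - p) + u * inner (p - y2) (z - p) = inner (p - z) (z - p)"
      unfolding z_def by (simp add: inner_diff_left inner_add_left algebra_simps)
    have j1: "(1 - u) * (l * inner (p - y1) w1) \<le> (1 - u) * inner (p - y1) (z - p)"
      using i1 u by (simp add: mult_left_mono)
    have j2: "u * (l * inner (p - y2) w2) \<le> u * inner (p - y2) (z - p)"
      using i2 u by (simp add: mult_left_mono)
    have "norm (p - z)^2 = - inner (p - z) (z - p)"
      by (simp add: power2_norm_eq_inner inner_diff_left inner_diff_right inner_commute)
    also have "\<dots> \<le> - ((1 - u) * (l * inner (p - y1) w1) + u * (l * inner (p - y2) w2))"
      using j1 j2 comb by linarith
    also have "\<dots> = l * ((1 - u) * inner (y1 - p) w1 + u * inner (y2 - p) w2)"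
      by (simp add: inner_diff_left algebra_simps)
    also have "\<dots> \<le> l * ((1 - u) * (norm (y1 - p) * W) + u * (norm (y2 - p) * W))"
    proof -
      have a: "inner (y1 - p) w1 \<le> norm (y1 - p) * W"
      proof -
        have "inner (y1 - p) w1 \<le> norm (y1 - p) * norm w1" by (rule norm_cauchy_schwarz)
        also have "\<dots> \<le> norm (y1 - p) * W" unfolding W_def by (intro mult_left_mono) auto
        finally show ?thesis .
      qed
      have b: "inner (y2 - p) w2 \<le> norm (y2 - p) * W"
      proof -
        have "inner (y2 - p) w2 \<le> norm (y2 - p) * norm w2" by (rule norm_cauchy_schwarz)
        also have "\<dots> \<le> norm (y2 - p) * W" unfolding W_def by (intro mult_left_mono) auto
        finally show ?thesis .
      qed
      have "(1 - u) * inner (y1 - p) w1 + u * inner (y2 - p) w2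
          \<le> (1 - u) * (norm (y1 - p) * W) + u * (norm (y2 - p) * W)"
        using a b u by (intro add_mono mult_left_mono) auto
      then show ?thesis using l0 by (intro mult_left_mono) auto
    qed
    also have "\<dots> \<le> l * W * (Y + 2 * norm (p - z))"
    proof -
      have t1: "norm (y1 - p) \<le> norm (y1 - z) + norm (p - z)"
        using norm_triangle_ineq[of "y1 - z" "z - p"] by (simp add: norm_minus_commute)
      have t2: "norm (y2 - p) \<le> norm (y2 - z) + norm (p - z)"
        using norm_triangle_ineq[of "y2 - z" "z - p"] by (simp add: norm_minus_commute)
      have a: "norm (y1 - p) \<le> Y + 2 * norm (p - z)"
        using t1 norm_ge_zero[of "y2 - z"] norm_ge_zero[of "p - z"] unfolding Y_def by linarith
      have b: "norm (y2 - p) \<le> Y + 2 * norm (p - z)"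
        using t2 norm_ge_zero[of "y1 - z"] norm_ge_zero[of "p - z"] unfolding Y_def by linarith
      have "(1 - u) * (norm (y1 - p) * W) + u * (norm (y2 - p) * W)
          \<le> (1 - u) * ((Y + 2 * norm (p - z)) * W) + u * ((Y + 2 * norm (p - z)) * W)"
        using a b u W0 by (intro add_mono mult_left_mono mult_right_mono) auto
      also have "\<dots> = (Y + 2 * norm (p - z)) * W" by (rule comb_id)
      also have "\<dots> = W * (Y + 2 * norm (p - z))" by (rule mult.commute)
      finally have "(1 - u) * (norm (y1 - p) * W) + u * (norm (y2 - p) * W) \<le> W * (Y + 2 * norm (p - z))" .
      then have "l * ((1 - u) * (norm (y1 - p) * W) + u * (norm (y2 - p) * W)) \<le> l * (W * (Y + 2 * norm (p - z)))"
        using l0 by (intro mult_left_mono) auto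
      then show ?thesis by (simp add: mult.assoc)
    qed
    finally have "norm (p - z) < e"
      by (intro small_delta[OF e Y0 W0 norm_ge_zero l_def])
    moreover have "p \<in> op_dom M" using pw(1) unfolding op_dom_def by blast
    ultimately show "\<exists>y\<in>op_dom M. dist y z < e" by (auto simp: dist_norm)
  qed
qed

lemma shift_lemma:
  fixes M :: "'a::{real_inner,complete_space} \<Rightarrow> 'a set"
  assumes mM: "mm M" and u: "u \<in> M x" and lb: "\<And>y. y \<in> op_dom M \<Longrightarrow> c \<le> inner n y"
    and l: "0 < l"
  shows "\<exists>e. u - l *\<^sub>R n + e \<in> M (x - e) \<and> norm e ^ 2 \<le> l * (inner n x - c)"
proof -
  define p where "p = resolvent M (x + u - l *\<^sub>R n)"
  have pin: "(x + u - l *\<^sub>R n) - p \<in> M p" unfolding p_def by (rule resolvent_in[OF mM])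
  define e where "e = x - p"
  have eq1: "(x + u - l *\<^sub>R n) - p = u - l *\<^sub>R n + e" unfolding e_def by (simp add: algebra_simps)
  have eq2: "p = x - e" unfolding e_def by simp
  have pin': "u - l *\<^sub>R n + e \<in> M (x - e)" using pin unfolding eq1 by (simp add: eq2[symmetric])
  have mono: "0 \<le> inner (p - x) ((u - l *\<^sub>R n + e) - u)"
    using monoD[OF mm_mono[OF mM] pin[unfolded eq1] u] .
  have "inner (p - x) ((u - l *\<^sub>R n + e) - u) = l * inner n e - norm e ^ 2"
    unfolding e_def by (simp add: inner_diff_left inner_diff_right power2_norm_eq_inner
        inner_commute algebra_simps)
  then have ne: "norm e ^ 2 \<le> l * inner n e" using mono by linarith
  have "p \<in> op_dom M" using pin unfolding op_dom_def by blast
  then have "c \<le> inner n p" by (rule lb)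
  moreover have "inner n e = inner n x - inner n p" unfolding e_def by (simp add: inner_diff_right)
  ultimately have "inner n e \<le> inner n x - c" by linarith
  then have "l * inner n e \<le> l * (inner n x - c)" using l by simp
  then show ?thesis using ne pin' by (intro exI[of _ e]) simp
qed

lemma op_dom_inv: "op_dom (op_inv M) = op_ran M"
  unfolding op_dom_def op_ran_def op_inv_def by auto

lemma shift_dual:
  fixes M :: "'a::{real_inner,complete_space} \<Rightarrow> 'a set"
  assumes mM: "mm M" and u: "u \<in> M x" and lb: "\<And>y. y \<in> op_ran M \<Longrightarrow> c \<le> inner n y"
    and l: "0 < l"
  shows "\<exists>e. u - e \<in> M (x - l *\<^sub>R n + e) \<and> norm e ^ 2 \<le> l * (inner n u - c)"
proof -
  have x: "x \<in> op_inv M u" using u unfolding op_inv_def by simp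
  obtain e where e: "x - l *\<^sub>R n + e \<in> op_inv M (u - e)" "norm e ^ 2 \<le> l * (inner n u - c)"
    using shift_lemma[OF mm_inv[OF mM] x _ l, of c] lb unfolding op_dom_inv by blast
  then show ?thesis unfolding op_inv_def by auto
qed

lemma ray_closure:
  fixes S :: "'a::real_normed_vector set"
  assumes cv: "convex (closure S)" and s: "s \<in> S" and K: "0 \<le> K"
    and H: "\<And>l. 0 < l \<Longrightarrow> \<exists>e. s + l *\<^sub>R w + e \<in> S \<and> norm e ^ 2 \<le> l * K"
  shows "s + w \<in> closure S"
proof -
  have "s + w \<in> closure (closure S)" unfolding closure_approachable
  proof (intro allI impI)
    fix ep :: real assume ep: "0 < ep"
    define l where "l = 1 + K / ep^2"
    have l1: "1 \<le> l" unfolding l_def using K ep by simp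
    then have l0: "0 < l" by simp
    obtain e where e: "s + l *\<^sub>R w + e \<in> S" "norm e ^ 2 \<le> l * K" using H[OF l0] by blast
    define q where "q = (1 - 1/l) *\<^sub>R s + (1/l) *\<^sub>R (s + l *\<^sub>R w + e)"
    have q: "q \<in> closure S" unfolding q_def
      using cv s e(1) l1 closure_subset[of S] unfolding convex_alt
      by (metis divide_le_eq_1_pos divide_nonneg_pos l0 less_eq_real_def subsetD zero_less_one)
    have qeq: "q = s + w + (1/l) *\<^sub>R e" unfolding q_def using l0
      by (simp add: algebra_simps)
    have "dist q (s + w) = norm e / l" unfolding qeq dist_norm using l0 by simp
    moreover have "(norm e / l)^2 < ep^2"
    proof -
      have "(norm e / l)^2 = norm e ^ 2 / l^2" by (simp add: power_divide)
      also have "\<dots> \<le> (l * K) / l^2" using e(2) l0 by (simp add: divide_right_mono)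
      also have "\<dots> = K / l" using l0 by (simp add: power2_eq_square)
      also have "\<dots> < ep^2"
      proof -
        have "ep^2 * l = ep^2 + K" unfolding l_def using ep by (simp add: field_simps)
        then have "K < ep^2 * l" using ep by simp
        then show ?thesis using l0 by (simp add: pos_divide_less_eq)
      qed
      finally show ?thesis .
    qed
    then have "norm e / l < ep" using ep by (simp add: power_less_imp_less_base)
    ultimately show "\<exists>y\<in>closure S. dist y (s + w) < ep" using q by (intro bexI[of _ q]) auto
  qed
  then show ?thesis by simp
qed

lemma translate_closure:
  fixes S :: "'a::real_normed_vector set"
  assumes H: "\<And>s. s \<in> S \<Longrightarrow> s + w \<in> closure S" and s: "s \<in> closure S"
  shows "s + w \<in> closure S"
  unfolding closure_approachable
proof (intro allI impI)
  fix ep :: real assume ep: "0 < ep"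
  obtain s' where s': "s' \<in> S" "dist s' s < ep/2" using s ep unfolding closure_approachable
    by (meson half_gt_zero)
  obtain y where y: "y \<in> S" "dist y (s' + w) < ep/2" using H[OF s'(1)] ep unfolding closure_approachable
    by (meson half_gt_zero)
  have "dist (s' + w) (s + w) = dist s' s" by (simp add: dist_norm)
  then have "dist y (s + w) < ep" using y(2) s'(2) dist_triangle[of y "s + w" "s' + w"] by linarith
  then show "\<exists>y\<in>S. dist y (s + w) < ep" using y(1) by blast
qed

lemma set_diff_mem: "x \<in> P \<Longrightarrow> y \<in> Q \<Longrightarrow> x - y \<in> set_diff P Q"
  unfolding set_diff_def by blast

lemma set_sum_mem: "x \<in> P \<Longrightarrow> y \<in> Q \<Longrightarrow> x + y \<in> set_sum P Q"
  unfolding set_sum_def by blast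

lemma op_dom_mem: "u \<in> A x \<Longrightarrow> x \<in> op_dom A"
  unfolding op_dom_def by blast

lemma op_ran_mem: "u \<in> A x \<Longrightarrow> u \<in> op_ran A"
  unfolding op_ran_def by blast

lemma closure_diff_mem:
  fixes P Q :: "'a::real_normed_vector set"
  assumes a: "a \<in> closure P" and b: "b \<in> closure Q"
  shows "a - b \<in> closure (set_diff P Q)"
  unfolding closure_approachable
proof (intro allI impI)
  fix ep :: real assume ep: "0 < ep"
  obtain a' where a': "a' \<in> P" "dist a' a < ep/2" using a ep unfolding closure_approachable
    by (meson half_gt_zero)
  obtain b' where b': "b' \<in> Q" "dist b' b < ep/2" using b ep unfolding closure_approachable
    by (meson half_gt_zero)
  have "dist (a' - b') (a - b) \<le> dist a' a + dist b' b"
    unfolding dist_norm using norm_triangle_ineq4[of "a' - a" "b' - b"] by (simp add: algebra_simps)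
  then have "dist (a' - b') (a - b) < ep" using a'(2) b'(2) by linarith
  then show "\<exists>y\<in>set_diff P Q. dist y (a - b) < ep" using set_diff_mem[OF a'(1) b'(1)] by blast
qed

lemma closure_sum_mem:
  fixes P Q :: "'a::real_normed_vector set"
  assumes a: "a \<in> closure P" and b: "b \<in> closure Q"
  shows "a + b \<in> closure (set_sum P Q)"
  unfolding closure_approachable
proof (intro allI impI)
  fix ep :: real assume ep: "0 < ep"
  obtain a' where a': "a' \<in> P" "dist a' a < ep/2" using a ep unfolding closure_approachable
    by (meson half_gt_zero)
  obtain b' where b': "b' \<in> Q" "dist b' b < ep/2" using b ep unfolding closure_approachable
    by (meson half_gt_zero)
  have "dist (a' + b') (a + b) \<le> dist a' a + dist b' b"
    unfolding dist_norm using norm_triangle_ineq[of "a' - a" "b' - b"] by (simp add: algebra_simps)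
  then have "dist (a' + b') (a + b) < ep" using a'(2) b'(2) by linarith
  then show "\<exists>y\<in>set_sum P Q. dist y (a + b) < ep" using set_sum_mem[OF a'(1) b'(1)] by blast
qed

lemma comb_diff: "(1 - u) *\<^sub>R (x1 - y1) + u *\<^sub>R (x2 - y2)
   = ((1 - u) *\<^sub>R x1 + u *\<^sub>R x2) - ((1 - u) *\<^sub>R y1 + u *\<^sub>R (y2::'a::real_vector))"
  by (simp add: algebra_simps)

lemma comb_sum: "(1 - u) *\<^sub>R (x1 + y1) + u *\<^sub>R (x2 + y2)
   = ((1 - u) *\<^sub>R x1 + u *\<^sub>R x2) + ((1 - u) *\<^sub>R y1 + u *\<^sub>R (y2::'a::real_vector))"
  by (simp add: algebra_simps)

lemma convex_closure_diff:
  fixes P Q :: "'a::real_normed_vector set"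
  assumes "convex (closure P)" "convex (closure Q)"
  shows "convex (closure (set_diff P Q))"
proof (rule closure_convex_from_combos)
  fix d1 d2 and u :: real assume d: "d1 \<in> set_diff P Q" "d2 \<in> set_diff P Q" and u: "0 \<le> u" "u \<le> 1"
  obtain x1 y1 where 1: "d1 = x1 - y1" "x1 \<in> P" "y1 \<in> Q" using d(1) unfolding set_diff_def by blast
  obtain x2 y2 where 2: "d2 = x2 - y2" "x2 \<in> P" "y2 \<in> Q" using d(2) unfolding set_diff_def by blast
  have "(1 - u) *\<^sub>R x1 + u *\<^sub>R x2 \<in> closure P"
    using assms(1) 1(2) 2(2) u closure_subset[of P] unfolding convex_alt by blast
  moreover have "(1 - u) *\<^sub>R y1 + u *\<^sub>R y2 \<in> closure Q"
    using assms(2) 1(3) 2(3) u closure_subset[of Q] unfolding convex_alt by blast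
  ultimately show "(1 - u) *\<^sub>R d1 + u *\<^sub>R d2 \<in> closure (set_diff P Q)"
    unfolding 1(1) 2(1) comb_diff by (rule closure_diff_mem)
qed

lemma convex_closure_sum:
  fixes P Q :: "'a::real_normed_vector set"
  assumes "convex (closure P)" "convex (closure Q)"
  shows "convex (closure (set_sum P Q))"
proof (rule closure_convex_from_combos)
  fix d1 d2 and u :: real assume d: "d1 \<in> set_sum P Q" "d2 \<in> set_sum P Q" and u: "0 \<le> u" "u \<le> 1"
  obtain x1 y1 where 1: "d1 = x1 + y1" "x1 \<in> P" "y1 \<in> Q" using d(1) unfolding set_sum_def by blast
  obtain x2 y2 where 2: "d2 = x2 + y2" "x2 \<in> P" "y2 \<in> Q" using d(2) unfolding set_sum_def by blast
  have "(1 - u) *\<^sub>R x1 + u *\<^sub>R x2 \<in> closure P"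
    using assms(1) 1(2) 2(2) u closure_subset[of P] unfolding convex_alt by blast
  moreover have "(1 - u) *\<^sub>R y1 + u *\<^sub>R y2 \<in> closure Q"
    using assms(2) 1(3) 2(3) u closure_subset[of Q] unfolding convex_alt by blast
  ultimately show "(1 - u) *\<^sub>R d1 + u *\<^sub>R d2 \<in> closure (set_sum P Q)"
    unfolding 1(1) 2(1) comb_sum by (rule closure_sum_mem)
qed

lemma sq_le_iff: "0 \<le> a \<Longrightarrow> 0 \<le> b \<Longrightarrow> a \<le> b \<longleftrightarrow> a^2 \<le> (b::real)^2"
  by (auto intro: power_mono power2_le_imp_le)

lemma proj_var_from_min:
  fixes S :: "'a::real_inner set"
  assumes cv: "convex S" and p: "p \<in> S" and mn: "\<And>y. y \<in> S \<Longrightarrow> norm (x - p)^2 \<le> norm (x - y)^2"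
    and y: "y \<in> S"
  shows "inner (x - p) (y - p) \<le> 0"
proof -
  have h: "0 \<le> 2 * inner (x - p) (p - y) + t * norm (p - y)^2" if t: "0 < t" "t \<le> 1" for t
  proof -
    have q: "(1 - t) *\<^sub>R p + t *\<^sub>R y \<in> S" using cv p y t unfolding convex_alt by simp
    have xq: "x - ((1 - t) *\<^sub>R p + t *\<^sub>R y) = (1 - t) *\<^sub>R (x - p) + t *\<^sub>R (x - y)"
      by (simp add: algebra_simps)
    have bd: "(x - y) - (x - p) = p - y" by simp
    have "norm (x - p)^2 \<le> norm (x - ((1 - t) *\<^sub>R p + t *\<^sub>R y))^2" using mn[OF q] .
    also have "\<dots> = norm (x - p)^2 + 2 * t * inner (x - p) (p - y) + t^2 * norm (p - y)^2"
      unfolding xq norm_comb_sq bd ..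
    finally have "0 \<le> t * (2 * inner (x - p) (p - y) + t * norm (p - y)^2)"
      by (simp add: algebra_simps power2_eq_square)
    then show ?thesis using t by (simp add: zero_le_mult_iff)
  qed
  have "0 \<le> 2 * inner (x - p) (p - y)" by (rule lin_nonneg[OF h zero_le_power2])
  moreover have "inner (x - p) (p - y) = - inner (x - p) (y - p)"
    by (simp add: inner_diff_right)
  ultimately show ?thesis by simp
qed

lemma proj_exists:
  fixes S :: "'a::{real_inner,complete_space} set"
  assumes cl: "closed S" and cv: "convex S" and ne: "S \<noteq> {}"
  shows "\<exists>p\<in>S. \<forall>y\<in>S. norm (x - p)^2 \<le> norm (x - y)^2"
proof -
  define F where "F = (\<lambda>y. norm (x - y)^2)"
  define d where "d = Inf (F ` S)"
  have bdd: "bdd_below (F ` S)" unfolding F_def by (rule bdd_belowI[where m=0]) auto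
  have dle: "d \<le> F y" if "y \<in> S" for y unfolding d_def using bdd that by (intro cInf_lower) auto
  have "\<exists>y\<in>S. F y < d + 1/(real k+1)" for k :: nat
  proof -
    have "Inf (F ` S) < d + 1/(real k+1)" unfolding d_def by simp
    then obtain h where "h \<in> F ` S" "h < d + 1/(real k+1)"
      using cInf_lessD[of "F ` S"] ne by blast
    then show ?thesis by blast
  qed
  then obtain s where sS: "\<And>k. s k \<in> S" and sF: "\<And>k. F (s k) < d + 1/(real k+1)" by metis
  have bound: "norm (s i - s j)^2 \<le> 2 * (1/(real i+1) + 1/(real j+1))" for i j
  proof -
    have mid0: "(1/2) *\<^sub>R s i + (1/2) *\<^sub>R s j \<in> S"
      by (rule convexD[OF cv sS[of i] sS[of j]]) auto
    have "(1/2) *\<^sub>R s i + (1/2) *\<^sub>R s j = (1/2) *\<^sub>R (s i + s j)"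
      by (simp add: scaleR_add_right)
    then have mid: "(1/2) *\<^sub>R (s i + s j) \<in> S" using mid0 by simp
    have hh: "(1/2) *\<^sub>R x + (1/2) *\<^sub>R x = x" by (simp flip: scaleR_add_left)
    have xm: "x - (1/2) *\<^sub>R (s i + s j) = (1/2) *\<^sub>R ((x - s i) + (x - s j))"
      using hh by (simp add: algebra_simps)
    have nd: "norm ((x - s i) - (x - s j)) = norm (s i - s j)"
      by (simp add: norm_minus_commute)
    have "d \<le> F ((1/2) *\<^sub>R (s i + s j))" using dle[OF mid] .
    also have "\<dots> = (F (s i) + F (s j))/2 - norm (s i - s j)^2/4"
      unfolding F_def xm mid_sq nd ..
    finally have "norm (s i - s j)^2 \<le> 2 * (F (s i) + F (s j)) - 4 * d" by (simp add: field_simps)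
    also have "\<dots> \<le> 2 * (1/(real i+1) + 1/(real j+1))"
      using sF[of i] sF[of j] by simp
    finally show ?thesis .
  qed
  have cs: "Cauchy s" by (rule cauchy_from_bound[where K=2, OF _ bound]) simp
  obtain p where p: "s \<longlonglongrightarrow> p" using cs Cauchy_convergent_iff convergent_def by blast
  have pS: "p \<in> S" by (rule closed_sequentially[OF cl sS p])
  have "F p \<le> F y" if y: "y \<in> S" for y
  proof -
    have "(\<lambda>k. F (s k)) \<longlonglongrightarrow> F p" unfolding F_def by (intro tendsto_intros p)
    moreover have "(\<lambda>k. F y + 1/(real k+1)) \<longlonglongrightarrow> F y + 0"
    proof (intro tendsto_intros)
      show "(\<lambda>k. 1/(real k+1)) \<longlonglongrightarrow> 0"
        using LIMSEQ_inverse_real_of_nat by (simp add: inverse_eq_divide add.commute)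
    qed
    moreover have "\<forall>k. F (s k) \<le> F y + 1/(real k+1)"
    proof
      fix k
      show "F (s k) \<le> F y + 1/(real k+1)" using sF[of k] dle[OF y] by linarith
    qed
    ultimately have "F p \<le> F y + 0" by (intro LIMSEQ_le) auto
    then show ?thesis by simp
  qed
  then show ?thesis using pS unfolding F_def by blast
qed

lemma proj_props:
  fixes S :: "'a::{real_inner,complete_space} set"
  assumes cl: "closed S" and cv: "convex S" and ne: "S \<noteq> {}"
  shows "proj S x \<in> S \<and> (\<forall>y\<in>S. inner (x - proj S x) (y - proj S x) \<le> 0)"
proof -
  obtain p where p: "p \<in> S" "\<And>y. y \<in> S \<Longrightarrow> norm (x - p)^2 \<le> norm (x - y)^2"
    using proj_exists[OF assms] by blast
  have pd: "p \<in> S \<and> (\<forall>y\<in>S. dist x p \<le> dist x y)"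
    using p unfolding dist_norm by (auto intro: power2_le_imp_le)
  have uniq: "q = p" if q: "q \<in> S \<and> (\<forall>y\<in>S. dist x q \<le> dist x y)" for q
  proof -
    have qm: "\<And>y. y \<in> S \<Longrightarrow> norm (x - q)^2 \<le> norm (x - y)^2"
      using q unfolding dist_norm by (auto intro: power_mono)
    have a: "inner (x - q) (p - q) \<le> 0" using proj_var_from_min[OF cv _ qm p(1)] q by blast
    have b: "inner (x - p) (q - p) \<le> 0" using proj_var_from_min[OF cv p(1) p(2)] q by blast
    have "inner (x - q) (p - q) + inner (x - p) (q - p) = norm (p - q)^2"
      by (simp add: power2_norm_eq_inner inner_diff_left inner_diff_right inner_commute algebra_simps)
    then have "norm (p - q)^2 \<le> 0" using a b by linarith
    then show ?thesis by simp
  qed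
  have "proj S x = p" unfolding proj_def by (rule the_equality) (use pd uniq in blast)+
  then show ?thesis using p proj_var_from_min[OF cv p(1) p(2)] by auto
qed

lemma proj0:
  fixes S :: "'a::{real_inner,complete_space} set"
  assumes "closed S" "convex S" "S \<noteq> {}"
  shows "proj S 0 \<in> S" "\<And>y. y \<in> S \<Longrightarrow> norm (proj S 0)^2 \<le> inner (proj S 0) y"
proof -
  show "proj S 0 \<in> S" using proj_props[OF assms] by blast
  fix y assume "y \<in> S"
  then have "inner (0 - proj S 0) (y - proj S 0) \<le> 0" using proj_props[OF assms] by blast
  then show "norm (proj S 0)^2 \<le> inner (proj S 0) y"
    by (simp add: inner_diff_right power2_norm_eq_inner)
qed

definition phi :: "('a::real_inner \<Rightarrow> 'a set) \<Rightarrow> 'a \<Rightarrow> 'a \<Rightarrow> real" where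
  "phi A z w = norm (resolvent A z - resolvent A w)^2
      + norm ((z - resolvent A z) - (w - resolvent A w))^2"

lemma phi_le:
  fixes A :: "'a::{real_inner,complete_space} \<Rightarrow> 'a set"
  assumes mA: "mm A"
  shows "phi A z w \<le> norm (z - w)^2"
proof -
  define P where "P = resolvent A z - resolvent A w"
  define Q where "Q = (z - resolvent A z) - (w - resolvent A w)"
  have PQ: "0 \<le> inner P Q" unfolding P_def Q_def
    by (rule monoD[OF mm_mono[OF mA] resolvent_in[OF mA] resolvent_in[OF mA]])
  have "z - w = P + Q" unfolding P_def Q_def by simp
  then have "norm (z - w)^2 = norm P^2 + 2 * inner P Q + norm Q^2" by (simp add: norm_add_sq)
  then show ?thesis unfolding phi_def P_def[symmetric] Q_def[symmetric] using PQ by linarith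
qed

lemma alg_key:
  fixes q r s :: "'a::real_inner"
  assumes "0 \<le> inner r s"
  shows "norm (q + r)^2 \<le> norm (r + s + q)^2 + norm q^2"
proof -
  have e1: "r + s + q = (q + r) + s" by (simp add: algebra_simps)
  have e2: "norm ((q + r) + s)^2 = norm (q + r)^2 + 2 * inner (q + r) s + norm s^2" by (rule norm_add_sq)
  have e3: "inner (q + r) s = inner q s + inner r s" by (simp add: inner_add_left)
  have e4: "norm (s + q)^2 = norm s^2 + 2 * inner s q + norm q^2" by (rule norm_add_sq)
  have e5: "inner s q = inner q s" by (rule inner_commute)
  have "0 \<le> norm (s + q)^2" by simp
  then show ?thesis unfolding e1 using e2 e3 e4 e5 assms by linarith
qed

lemma dr_fejer:
  fixes A B :: "'a::{real_inner,complete_space} \<Rightarrow> 'a set"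
  assumes mA: "mm A" and mB: "mm B"
    and T_def: "T = (\<lambda>y. y - resolvent A y + resolvent B (reflected A y))"
  shows "phi A (T z) (T w) \<le> phi A z w" "norm (T z - T w)^2 \<le> phi A z w"
    "norm (T z - T w) \<le> norm (z - w)"
proof -
  define p where "p = resolvent A z - resolvent A w"
  define q where "q = (z - resolvent A z) - (w - resolvent A w)"
  define b where "b = resolvent B (reflected A z)"
  define b' where "b' = resolvent B (reflected A w)"
  define r where "r = b - b'"
  define s where "s = (reflected A z - b) - (reflected A w - b')"
  have rs: "0 \<le> inner r s" unfolding r_def s_def b_def b'_def
    by (rule monoD[OF mm_mono[OF mB] resolvent_in[OF mB] resolvent_in[OF mB]])
  have pe: "p = r + s + q" unfolding p_def q_def r_def s_def reflected_def
    by (simp add: algebra_simps scaleR_2)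
  have Te: "T z - T w = q + r" unfolding T_def q_def r_def b_def b'_def by (simp add: algebra_simps)
  have ph: "phi A z w = norm p^2 + norm q^2" unfolding phi_def p_def q_def ..
  have k: "norm (T z - T w)^2 \<le> phi A z w" unfolding Te ph pe using alg_key[OF rs, of q] .
  then show "norm (T z - T w)^2 \<le> phi A z w" .
  show "phi A (T z) (T w) \<le> phi A z w" using phi_le[OF mA, of "T z" "T w"] k by linarith
  have "norm (T z - T w)^2 \<le> norm (z - w)^2" using k phi_le[OF mA, of z w] by linarith
  then show "norm (T z - T w) \<le> norm (z - w)" by (rule power2_le_imp_le) simp
qed

lemma vsplit:
  fixes A B :: "'a::{real_inner,complete_space} \<Rightarrow> 'a set"
  assumes mA: "mm A" and mB: "mm B"
    and cvD: "convex (closure (set_diff (op_dom A) (op_dom B)))"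
    and cvR: "convex (closure (set_sum (op_ran A) (op_ran B)))"
    and vD_in: "vD \<in> closure (set_diff (op_dom A) (op_dom B))"
    and vD_min: "\<And>d. d \<in> closure (set_diff (op_dom A) (op_dom B)) \<Longrightarrow> norm vD^2 \<le> inner vD d"
    and vR_in: "vR \<in> closure (set_sum (op_ran A) (op_ran B))"
    and vR_min: "\<And>r. r \<in> closure (set_sum (op_ran A) (op_ran B)) \<Longrightarrow> norm vR^2 \<le> inner vR r"
    and v_in: "v \<in> closure (set_diff (op_dom A) (op_dom B)) \<inter> closure (set_sum (op_ran A) (op_ran B))"
    and v_min: "\<And>w. w \<in> closure (set_diff (op_dom A) (op_dom B)) \<inter> closure (set_sum (op_ran A) (op_ran B))
                  \<Longrightarrow> norm v^2 \<le> inner v w"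
  shows "inner vD vR = 0" "v = vD + vR"
proof -
  define D where "D = set_diff (op_dom A) (op_dom B)"
  define R where "R = set_sum (op_ran A) (op_ran B)"
  have Dmin: "norm vD^2 \<le> inner vD (x - x')" if "u \<in> A x" "u' \<in> B x'" for x x' u u'
  proof -
    have "x - x' \<in> D" unfolding D_def by (rule set_diff_mem[OF op_dom_mem[of u A x, OF that(1)] op_dom_mem[of u' B x', OF that(2)]])
    then show ?thesis using vD_min closure_subset unfolding D_def by blast
  qed
  have Rmin: "norm vR^2 \<le> inner vR (u + u')" if "u \<in> A x" "u' \<in> B x'" for x x' u u'
  proof -
    have "u + u' \<in> R" unfolding R_def by (rule set_sum_mem[OF op_ran_mem[of u A x, OF that(1)] op_ran_mem[of u' B x', OF that(2)]])
    then show ?thesis using vR_min closure_subset unfolding R_def by blast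
  qed
  have b0: "s + vR \<in> closure D" if s: "s \<in> D" for s
  proof -
    obtain x x' where sx: "s = x - x'" "x \<in> op_dom A" "x' \<in> op_dom B" using s unfolding D_def set_diff_def by blast
    obtain u where u: "u \<in> A x" using sx(2) unfolding op_dom_def by blast
    obtain u' where u': "u' \<in> B x'" using sx(3) unfolding op_dom_def by blast
    define c where "c = norm vR^2 - inner vR u"
    have lb: "c \<le> inner vR y" if yin: "y \<in> op_ran B" for y
    proof -
      obtain z where "y \<in> B z" using yin unfolding op_ran_def by blast
      then have "norm vR^2 \<le> inner vR (u + y)" by (rule Rmin[OF u])
      then show ?thesis unfolding c_def by (simp add: inner_add_right)
    qed
    have K: "0 \<le> inner vR u' - c" using Rmin[OF u u'] unfolding c_def by (simp add: inner_add_right)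
    show ?thesis
    proof (rule ray_closure[OF cvD[folded D_def] s K])
      fix l :: real assume l: "0 < l"
      obtain e where e: "u' - e \<in> B (x' - l *\<^sub>R vR + e)" "norm e ^ 2 \<le> l * (inner vR u' - c)"
        using shift_dual[OF mB u' lb l] by blast
      have "x - (x' - l *\<^sub>R vR + e) \<in> D" unfolding D_def
        by (rule set_diff_mem[OF sx(2) op_dom_mem[of _ B, OF e(1)]])
      moreover have "x - (x' - l *\<^sub>R vR + e) = s + l *\<^sub>R vR + (- e)" unfolding sx(1) by simp
      ultimately show "\<exists>e. s + l *\<^sub>R vR + e \<in> D \<and> norm e ^ 2 \<le> l * (inner vR u' - c)"
        using e(2) by (intro exI[of _ "- e"]) simp
    qed
  qed
  have b: "d + vR \<in> closure D" if "d \<in> closure D" for d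
    by (rule translate_closure[OF b0 that])
  have c0: "s + (- vR) \<in> closure D" if s: "s \<in> D" for s
  proof -
    obtain x x' where sx: "s = x - x'" "x \<in> op_dom A" "x' \<in> op_dom B" using s unfolding D_def set_diff_def by blast
    obtain u where u: "u \<in> A x" using sx(2) unfolding op_dom_def by blast
    obtain u' where u': "u' \<in> B x'" using sx(3) unfolding op_dom_def by blast
    define c where "c = norm vR^2 - inner vR u'"
    have lb: "c \<le> inner vR y" if yin: "y \<in> op_ran A" for y
    proof -
      obtain z where "y \<in> A z" using yin unfolding op_ran_def by blast
      then have "norm vR^2 \<le> inner vR (y + u')" by (rule Rmin[OF _ u'])
      then show ?thesis unfolding c_def by (simp add: inner_add_right)
    qed
    have K: "0 \<le> inner vR u - c" using Rmin[OF u u'] unfolding c_def by (simp add: inner_add_right)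
    show ?thesis
    proof (rule ray_closure[OF cvD[folded D_def] s K])
      fix l :: real assume l: "0 < l"
      obtain e where e: "u - e \<in> A (x - l *\<^sub>R vR + e)" "norm e ^ 2 \<le> l * (inner vR u - c)"
        using shift_dual[OF mA u lb l] by blast
      have "(x - l *\<^sub>R vR + e) - x' \<in> D" unfolding D_def
        by (rule set_diff_mem[OF op_dom_mem[of _ A, OF e(1)] sx(3)])
      moreover have "(x - l *\<^sub>R vR + e) - x' = s + l *\<^sub>R (- vR) + e" unfolding sx(1) by simp
      ultimately show "\<exists>e. s + l *\<^sub>R (- vR) + e \<in> D \<and> norm e ^ 2 \<le> l * (inner vR u - c)"
        using e(2) by (intro exI[of _ e]) simp
    qed
  qed
  have c: "d + (- vR) \<in> closure D" if "d \<in> closure D" for d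
    by (rule translate_closure[OF c0 that])
  have a0: "s + vD \<in> closure R" if s: "s \<in> R" for s
  proof -
    obtain u u' where su: "s = u + u'" "u \<in> op_ran A" "u' \<in> op_ran B" using s unfolding R_def set_sum_def by blast
    obtain x where u: "u \<in> A x" using su(2) unfolding op_ran_def by blast
    obtain x' where u': "u' \<in> B x'" using su(3) unfolding op_ran_def by blast
    define c where "c = norm vD^2 - inner vD x"
    have lb: "c \<le> inner (- vD) y" if yin: "y \<in> op_dom B" for y
    proof -
      obtain z where "z \<in> B y" using yin unfolding op_dom_def by blast
      then have "norm vD^2 \<le> inner vD (x - y)" by (rule Dmin[OF u])
      then show ?thesis unfolding c_def by (simp add: inner_diff_right)
    qed
    have K: "0 \<le> inner (- vD) x' - c" using Dmin[OF u u'] unfolding c_def by (simp add: inner_diff_right)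
    show ?thesis
    proof (rule ray_closure[OF cvR[folded R_def] s K])
      fix l :: real assume l: "0 < l"
      obtain e where e: "u' - l *\<^sub>R (- vD) + e \<in> B (x' - e)" "norm e ^ 2 \<le> l * (inner (- vD) x' - c)"
        using shift_lemma[OF mB u' lb l] by blast
      have m1: "u + (u' - l *\<^sub>R (- vD) + e) \<in> R" unfolding R_def
        by (rule set_sum_mem[OF su(2) op_ran_mem[of _ B, OF e(1)]])
      have m2: "u + (u' - l *\<^sub>R (- vD) + e) = s + l *\<^sub>R vD + e" using su(1) by (simp add: algebra_simps)
      have "s + l *\<^sub>R vD + e \<in> R" using m1 unfolding m2 .
      then show "\<exists>e. s + l *\<^sub>R vD + e \<in> R \<and> norm e ^ 2 \<le> l * (inner (- vD) x' - c)"
        using e(2) by blast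
    qed
  qed
  have a: "r + vD \<in> closure R" if "r \<in> closure R" for r
    by (rule translate_closure[OF a0 that])
  have vD_in': "vD \<in> closure D" using vD_in unfolding D_def .
  have vDmin': "norm vD^2 \<le> inner vD d" if "d \<in> closure D" for d using vD_min that unfolding D_def by blast
  have o1: "norm vD^2 \<le> inner vD (vD + vR)" by (rule vDmin'[OF b[OF vD_in']])
  have o2: "norm vD^2 \<le> inner vD (vD + (- vR))" by (rule vDmin'[OF c[OF vD_in']])
  have nn: "norm vD^2 = inner vD vD" by (simp add: power2_norm_eq_inner)
  show orth: "inner vD vR = 0" using o1 o2 nn by (simp add: inner_add_right inner_diff_right)
  have wD: "vD + vR \<in> closure D" by (rule b[OF vD_in'])
  have wR: "vR + vD \<in> closure R" by (rule a) (use vR_in R_def in simp)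
  have w: "vD + vR \<in> closure (set_diff (op_dom A) (op_dom B)) \<inter> closure (set_sum (op_ran A) (op_ran B))"
    using wD wR unfolding D_def R_def by (simp add: add.commute)
  have i1: "norm v^2 \<le> inner v (vD + vR)" by (rule v_min[OF w])
  have i2: "norm vD^2 \<le> inner vD v" using vD_min v_in by blast
  have i3: "norm vR^2 \<le> inner vR v" using vR_min v_in by blast
  have i4: "norm (vD + vR)^2 = norm vD^2 + norm vR^2" using orth by (simp add: norm_add_sq)
  have i5: "inner v (vD + vR) = inner vD v + inner vR v" by (simp add: inner_add_right inner_commute)
  have "norm (v - (vD + vR))^2 = norm v^2 - 2 * inner v (vD + vR) + norm (vD + vR)^2"
    by (rule norm_diff_sq)
  also have "\<dots> \<le> 0" using i1 i2 i3 i4 i5 by linarith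
  finally show "v = vD + vR" by simp
qed

lemma fix_step:
  fixes A B :: "'a::{real_inner,complete_space} \<Rightarrow> 'a set"
  assumes mA: "mm A" and mB: "mm B"
    and T_def: "T = (\<lambda>y. y - resolvent A y + resolvent B (reflected A y))"
    and Dmin: "\<And>x x' u u'. u \<in> A x \<Longrightarrow> u' \<in> B x' \<Longrightarrow> norm vD^2 \<le> inner vD (x - x')"
    and Rmin: "\<And>x x' u u'. u \<in> A x \<Longrightarrow> u' \<in> B x' \<Longrightarrow> norm vR^2 \<le> inner vR (u + u')"
    and orth: "inner vD vR = 0" and veq: "v = vD + vR"
    and y: "y = v + T y"
  shows "T y = y - v" "resolvent A (y - v) = resolvent A y - vR" "y - v = v + T (y - v)"
proof -
  define a where "a = resolvent A y"
  define as where "as = y - a"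
  define b where "b = resolvent B (reflected A y)"
  define bs where "bs = reflected A y - b"
  have aA: "as \<in> A a" unfolding as_def a_def by (rule resolvent_in[OF mA])
  have bB: "bs \<in> B b" unfolding bs_def b_def by (rule resolvent_in[OF mB])
  show Ty: "T y = y - v" using y by (simp add: algebra_simps)
  have Ty2: "T y = y - a + b" unfolding T_def a_def b_def by simp
  have beq: "b = a - v" using Ty Ty2 by (simp add: algebra_simps)
  have bseq: "bs = v - as" unfolding bs_def as_def reflected_def a_def[symmetric] beq
    by (simp add: algebra_simps scaleR_2)
  have vDv: "inner vD v = norm vD^2" unfolding veq using orth by (simp add: inner_add_right power2_norm_eq_inner)
  have vRv: "inner vR v = norm vR^2" unfolding veq using orth
    by (simp add: inner_add_right power2_norm_eq_inner inner_commute)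
  have JA: "resolvent A (y - v) = a - vR"
  proof (rule resolvent_eq[OF mA])
    show "(y - v) - (a - vR) \<in> A (a - vR)"
    proof (rule mmD[OF mA])
      fix x w assume w: "w \<in> A x"
      have m: "0 \<le> inner (a - x) (as - w)" by (rule monoD[OF mm_mono[OF mA] aA w])
      have h1: "inner vD (a - x) \<le> 0"
      proof -
        have "norm vD^2 \<le> inner vD (x - b)" by (rule Dmin[OF w bB])
        moreover have "inner vD (x - b) = - inner vD (a - x) + inner vD v"
          unfolding beq by (simp add: inner_diff_right)
        ultimately show ?thesis using vDv by linarith
      qed
      have h2: "inner vR (as - w) \<le> 0"
      proof -
        have "norm vR^2 \<le> inner vR (w + bs)" by (rule Rmin[OF w bB])
        moreover have "inner vR (w + bs) = - inner vR (as - w) + inner vR v"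
          unfolding bseq by (simp add: inner_diff_right inner_add_right)
        ultimately show ?thesis using vRv by linarith
      qed
      have e1: "(a - vR) - x = (a - x) - vR" by simp
      have e2: "((y - v) - (a - vR)) - w = (as - w) - vD" unfolding as_def veq by simp
      have E: "inner ((a - vR) - x) (((y - v) - (a - vR)) - w)
          = inner (a - x) (as - w) - inner vD (a - x) - inner vR (as - w) + inner vR vD"
        unfolding e1 e2 by (simp add: inner_diff_left inner_diff_right inner_commute)
      show "0 \<le> inner ((a - vR) - x) (((y - v) - (a - vR)) - w)"
        unfolding E using m h1 h2 orth by (simp add: inner_commute)
    qed
  qed
  then show "resolvent A (y - v) = resolvent A y - vR" unfolding a_def .
  have JB: "resolvent B (reflected A (y - v)) = b - vR"
  proof (rule resolvent_eq[OF mB])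
    have r: "reflected A (y - v) = 2 *\<^sub>R (a - vR) - (y - v)" unfolding reflected_def JA ..
    have bs2: "bs = 2 *\<^sub>R a - y - b" unfolding bs_def reflected_def a_def ..
    have r2: "reflected A (y - v) - (b - vR) = bs + vD"
      unfolding r bs2 by (simp add: veq algebra_simps scaleR_2)
    show "reflected A (y - v) - (b - vR) \<in> B (b - vR)"
      unfolding r2
    proof (rule mmD[OF mB])
      fix x w assume w: "w \<in> B x"
      have m: "0 \<le> inner (b - x) (bs - w)" by (rule monoD[OF mm_mono[OF mB] bB w])
      have h1: "0 \<le> inner vD (b - x)"
      proof -
        have "norm vD^2 \<le> inner vD (a - x)" by (rule Dmin[OF aA w])
        moreover have "inner vD (a - x) = inner vD (b - x) + inner vD v"
          unfolding beq by (simp add: inner_diff_right)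
        ultimately show ?thesis using vDv by linarith
      qed
      have h2: "inner vR (bs - w) \<le> 0"
      proof -
        have "norm vR^2 \<le> inner vR (as + w)" by (rule Rmin[OF aA w])
        moreover have "inner vR (as + w) = - inner vR (bs - w) + inner vR v"
          unfolding bseq by (simp add: inner_diff_right inner_add_right)
        ultimately show ?thesis using vRv by linarith
      qed
      have E: "inner ((b - vR) - x) ((bs + vD) - w)
          = inner (b - x) (bs - w) + inner vD (b - x) - inner vR (bs - w) - inner vR vD"
        by (simp add: inner_diff_left inner_diff_right inner_add_left inner_add_right inner_commute)
      show "0 \<le> inner ((b - vR) - x) ((bs + vD) - w)"
        unfolding E using m h1 h2 orth by (simp add: inner_commute)
    qed
  qed
  have "T (y - v) = (y - v) - (a - vR) + (b - vR)" unfolding T_def JA JB by simp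
  also have "\<dots> = y - v - v" unfolding beq by simp
  finally show "y - v = v + T (y - v)" by simp
qed

lemma S_sub_ZK: "solS A B v \<subseteq> solZ A B v \<times> solK A B v"
proof
  fix p assume p: "p \<in> solS A B v"
  obtain z k where zk: "p = (z, k)" by (cases p)
  have k1: "- k \<in> B (z - v)" and k2: "k \<in> (\<lambda>u. - v + u) ` A z" using p unfolding zk solS_def by auto
  have "0 \<in> set_sum ((\<lambda>u. - v + u) ` A z) (B (z - v))"
    using set_sum_mem[OF k2 k1] by simp
  then have Z: "z \<in> solZ A B v" unfolding solZ_def by simp
  have i1: "z \<in> op_inv (\<lambda>x. (\<lambda>u. - v + u) ` A x) k" unfolding op_inv_def using k2 by simp
  have i2: "- z \<in> op_vee (\<lambda>y. B (y - v)) k" unfolding op_vee_def op_inv_def using k1 by auto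
  have "0 \<in> set_sum (op_inv (\<lambda>x. (\<lambda>u. - v + u) ` A x) k) (op_vee (\<lambda>y. B (y - v)) k)"
    using set_sum_mem[OF i1 i2] by simp
  then have K: "k \<in> solK A B v" unfolding solK_def by simp
  show "p \<in> solZ A B v \<times> solK A B v" using Z K zk by simp
qed

lemma ZK_sub_S:
  assumes pA: "paramonotone A" and pB: "paramonotone B"
  shows "solZ A B v \<times> solK A B v \<subseteq> solS A B v"
proof
  fix p assume p: "p \<in> solZ A B v \<times> solK A B v"
  obtain z k where zk: "p = (z, k)" by (cases p)
  have Z: "0 \<in> set_sum ((\<lambda>u. - v + u) ` A z) (B (z - v))" using p zk unfolding solZ_def by simp
  then obtain al be where al: "al \<in> A z" and be: "be \<in> B (z - v)" and s0: "0 = (- v + al) + be"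
    unfolding set_sum_def by blast
  have K: "0 \<in> set_sum (op_inv (\<lambda>x. (\<lambda>u. - v + u) ` A x) k) (op_vee (\<lambda>y. B (y - v)) k)"
    using p zk unfolding solK_def by simp
  then obtain q r where q: "q \<in> op_inv (\<lambda>x. (\<lambda>u. - v + u) ` A x) k"
      and r: "r \<in> op_vee (\<lambda>y. B (y - v)) k" and qr: "0 = q + r"
    unfolding set_sum_def by blast
  obtain u where u: "u \<in> A q" "k = - v + u" using q unfolding op_inv_def by blast
  obtain y where y: "r = - y" "- k \<in> B (y - v)" using r unfolding op_vee_def op_inv_def by blast
  have yq: "y = q" using qr y(1) by (simp add: add_eq_0_iff)
  have kA: "k + v \<in> A q" using u by simp
  have kB: "- k \<in> B (q - v)" using y(2) yq by simp
  have mA: "monotone_op A" and mB: "monotone_op B" using pA pB unfolding paramonotone_def by blast+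
  have m1: "0 \<le> inner (z - q) (al - (k + v))" by (rule monoD[OF mA al kA])
  have m2: "0 \<le> inner ((z - v) - (q - v)) (be - (- k))" by (rule monoD[OF mB be kB])
  have bee: "be = v - al" using s0 by (simp add: algebra_simps eq_neg_iff_add_eq_0)
  have sum: "inner (z - q) (al - (k + v)) + inner ((z - v) - (q - v)) (be - (- k)) = 0"
    unfolding bee by (simp add: inner_diff_right inner_add_right)
  have z1: "inner (z - q) (al - (k + v)) = 0" using m1 m2 sum by linarith
  have z2: "inner ((z - v) - (q - v)) (be - (- k)) = 0" using m1 m2 sum by linarith
  have "k + v \<in> A z" using pA al kA z1 unfolding paramonotone_def by blast
  moreover have "- k \<in> B (z - v)" using pB be kB z2 unfolding paramonotone_def by blast
  ultimately show "p \<in> solS A B v" unfolding zk solS_def by (auto intro: image_eqI[of _ _ "k + v"])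
qed

theorem theorem5p5:
  fixes A B :: "'a::{real_inner, complete_space} \<Rightarrow> 'a set"
    and T :: "'a \<Rightarrow> 'a" and v vD vR f x :: 'a
  assumes mA: "max_monotone A" and mB: "max_monotone B"
    and T_def: "T = (\<lambda>y. y - resolvent A y + resolvent B (reflected A y))"
    and v_def: "v = proj (closure (range (\<lambda>y. y - T y))) 0"
    and vD_def: "vD = proj (closure (set_diff (op_dom A) (op_dom B))) 0"
    and vR_def: "vR = proj (closure (set_sum (op_ran A) (op_ran B))) 0"
    and hyp1: "closure (range (\<lambda>y. y - T y))
                 = closure (set_diff (op_dom A) (op_dom B) \<inter> set_sum (op_ran A) (op_ran B))"
    and hyp2: "closure (set_diff (op_dom A) (op_dom B) \<inter> set_sum (op_ran A) (op_ran B))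
                 = closure (set_diff (op_dom A) (op_dom B)) \<inter> closure (set_sum (op_ran A) (op_ran B))"
    and f: "f \<in> fixset v T"
  shows
    "fejer_monotone {(resolvent A y, resolvent (op_inv A) y) | y. y \<in> fixset v T}
       (\<lambda>n. (resolvent A ((T ^^ n) x) + real n *\<^sub>R vR,
             resolvent (op_inv A) ((T ^^ n) x) + real n *\<^sub>R vD))
   \<and> bounded (range (\<lambda>n. (resolvent A ((T ^^ n) x) + real n *\<^sub>R vR,
             resolvent (op_inv A) ((T ^^ n) x) + real n *\<^sub>R vD)))
   \<and> bounded (range (\<lambda>n. (resolvent B (reflected A ((T ^^ n) x)) + real n *\<^sub>R vR,
             resolvent (op_inv B) (reflected A ((T ^^ n) x)) - real n *\<^sub>R vD)))
   \<and> fejer_monotone (solS A B v)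
       (\<lambda>n. (0, - v) + (resolvent A ((T ^^ n) x) + real n *\<^sub>R vR,
             resolvent (op_inv A) ((T ^^ n) x) + real n *\<^sub>R vD))
   \<and> (bounded (range (\<lambda>n. resolvent A ((T ^^ n) x))) \<longleftrightarrow> vR = 0)
   \<and> (vR \<noteq> 0 \<longrightarrow> filterlim (\<lambda>n. norm (resolvent A ((T ^^ n) x))) at_top sequentially)
   \<and> (bounded (range (\<lambda>n. resolvent (op_inv A) ((T ^^ n) x))) \<longleftrightarrow> vD = 0)
   \<and> (vD \<noteq> 0 \<longrightarrow> filterlim (\<lambda>n. norm (resolvent (op_inv A) ((T ^^ n) x))) at_top sequentially)
   \<and> (paramonotone A \<and> paramonotone B \<longrightarrow>
        fejer_monotone (solZ A B v \<times> solK A B v)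
          (\<lambda>n. (0, - v) + (resolvent A ((T ^^ n) x) + real n *\<^sub>R vR,
                resolvent (op_inv A) ((T ^^ n) x) + real n *\<^sub>R vD)))"
proof -
  have mA': "mm A" by (rule max_monotone_mm[OF mA])
  have mB': "mm B" by (rule max_monotone_mm[OF mB])
  define D where "D = set_diff (op_dom A) (op_dom B)"
  define R where "R = set_sum (op_ran A) (op_ran B)"
  define F where "F = fixset v T"
  define JA where "JA = resolvent A"
  have JAi: "resolvent (op_inv A) z = z - JA z" for z unfolding JA_def by (rule resolvent_inv[OF mA'])
  have JBi: "resolvent (op_inv B) z = z - resolvent B z" for z by (rule resolvent_inv[OF mB'])
  have cvD: "convex (closure D)" unfolding D_def
    by (rule convex_closure_diff[OF dom_closure_convex[OF mA'] dom_closure_convex[OF mB']])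
  have cvR: "convex (closure R)" unfolding R_def op_dom_inv[symmetric]
    by (rule convex_closure_sum[OF dom_closure_convex[OF mm_inv[OF mA']] dom_closure_convex[OF mm_inv[OF mB']]])
  obtain a0 where a0: "0 - a0 \<in> A a0" using minty[OF mA'] by blast
  obtain b0 where b0: "0 - b0 \<in> B b0" using minty[OF mB'] by blast
  have neD: "closure D \<noteq> {}"
    using set_diff_mem[OF op_dom_mem[of _ A, OF a0] op_dom_mem[of _ B, OF b0]] closure_subset[of D]
    unfolding D_def by blast
  have neR: "closure R \<noteq> {}"
    using set_sum_mem[OF op_ran_mem[of _ A, OF a0] op_ran_mem[of _ B, OF b0]] closure_subset[of R]
    unfolding R_def by blast
  have vD_in: "vD \<in> closure D" unfolding vD_def D_def[symmetric] by (rule proj0(1)[OF closed_closure cvD neD])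
  have vD_min: "norm vD^2 \<le> inner vD d" if "d \<in> closure D" for d
    unfolding vD_def D_def[symmetric] by (rule proj0(2)[OF closed_closure cvD neD that])
  have vR_in: "vR \<in> closure R" unfolding vR_def R_def[symmetric] by (rule proj0(1)[OF closed_closure cvR neR])
  have vR_min: "norm vR^2 \<le> inner vR r" if "r \<in> closure R" for r
    unfolding vR_def R_def[symmetric] by (rule proj0(2)[OF closed_closure cvR neR that])
  have IDR: "closure (range (\<lambda>y. y - T y)) = closure D \<inter> closure R"
    using hyp1 hyp2 unfolding D_def R_def by simp
  have neI: "closure D \<inter> closure R \<noteq> {}" unfolding IDR[symmetric] using closure_subset by blast
  have clI: "closed (closure D \<inter> closure R)" by auto
  have cvI: "convex (closure D \<inter> closure R)" by (rule convex_Int[OF cvD cvR])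
  have vI: "v = proj (closure D \<inter> closure R) 0" unfolding v_def IDR ..
  have v_in: "v \<in> closure D \<inter> closure R" unfolding vI by (rule proj0(1)[OF clI cvI neI])
  have v_min: "norm v^2 \<le> inner v w" if "w \<in> closure D \<inter> closure R" for w
    unfolding vI by (rule proj0(2)[OF clI cvI neI that])
  have orth: "inner vD vR = 0" and veq: "v = vD + vR"
    using vsplit[OF mA' mB' cvD[unfolded D_def] cvR[unfolded R_def] vD_in[unfolded D_def]
        vD_min[unfolded D_def] vR_in[unfolded R_def] vR_min[unfolded R_def]
        v_in[unfolded D_def R_def] v_min[unfolded D_def R_def]] by blast+
  have Dmin: "norm vD^2 \<le> inner vD (x1 - x2)" if "u1 \<in> A x1" "u2 \<in> B x2" for x1 x2 u1 u2
  proof -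
    have "x1 - x2 \<in> D" unfolding D_def by (rule set_diff_mem[OF op_dom_mem[of u1 A x1, OF that(1)] op_dom_mem[of u2 B x2, OF that(2)]])
    then show ?thesis using vD_min closure_subset by blast
  qed
  have Rmin: "norm vR^2 \<le> inner vR (u1 + u2)" if "u1 \<in> A x1" "u2 \<in> B x2" for x1 x2 u1 u2
  proof -
    have "u1 + u2 \<in> R" unfolding R_def by (rule set_sum_mem[OF op_ran_mem[of u1 A x1, OF that(1)] op_ran_mem[of u2 B x2, OF that(2)]])
    then show ?thesis using vR_min closure_subset by blast
  qed
  have fs: "T y = y - v" "JA (y - v) = JA y - vR" "y - v \<in> F" if "y \<in> F" for y
  proof -
    have y: "y = v + T y" using that unfolding F_def fixset_def by simp
    note st = fix_step[OF mA' mB' T_def Dmin Rmin orth veq y]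
    show "T y = y - v" by (rule st(1))
    show "JA (y - v) = JA y - vR" unfolding JA_def by (rule st(2))
    show "y - v \<in> F" unfolding F_def fixset_def using st(3) by simp
  qed
  have iter: "(T ^^ n) y \<in> F \<and> (T ^^ n) y = y - real n *\<^sub>R v \<and> JA ((T ^^ n) y) = JA y - real n *\<^sub>R vR"
    if "y \<in> F" for y n
  proof (induction n)
    case 0
    then show ?case using that by simp
  next
    case (Suc n)
    then have z: "(T ^^ n) y \<in> F" by blast
    have "(T ^^ Suc n) y = T ((T ^^ n) y)" by simp
    also have "\<dots> = (T ^^ n) y - v" by (rule fs(1)[OF z])
    finally have e: "(T ^^ Suc n) y = (T ^^ n) y - v" .
    have IH2: "(T ^^ n) y = y - real n *\<^sub>R v" and IH3: "JA ((T ^^ n) y) = JA y - real n *\<^sub>R vR"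
      using Suc by blast+
    have g1: "(T ^^ Suc n) y \<in> F" unfolding e by (rule fs(3)[OF z])
    have g2: "(T ^^ Suc n) y = y - real (Suc n) *\<^sub>R v" unfolding e IH2 by (simp add: algebra_simps)
    have g3: "JA ((T ^^ Suc n) y) = JA y - real (Suc n) *\<^sub>R vR" unfolding e fs(2)[OF z] IH3
      by (simp add: algebra_simps)
    show ?case using g1 g2 g3 by blast
  qed
  define s where "s = (\<lambda>n. (resolvent A ((T ^^ n) x) + real n *\<^sub>R vR,
             resolvent (op_inv A) ((T ^^ n) x) + real n *\<^sub>R vD))"
  define cc where "cc = (\<lambda>y. (resolvent A y, resolvent (op_inv A) y))"
  have dist_eq: "norm (s n - cc y)^2 = phi A ((T ^^ n) x) ((T ^^ n) y)" if "y \<in> F" for y n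
  proof -
    have it: "(T ^^ n) y = y - real n *\<^sub>R v" "JA ((T ^^ n) y) = JA y - real n *\<^sub>R vR"
      using iter[OF that, of n] by blast+
    have c1: "JA ((T ^^ n) x) + real n *\<^sub>R vR - JA y = JA ((T ^^ n) x) - JA ((T ^^ n) y)"
      by (simp only: it(2)) simp
    have c2: "((T ^^ n) x - JA ((T ^^ n) x)) + real n *\<^sub>R vD - (y - JA y)
        = ((T ^^ n) x - JA ((T ^^ n) x)) - ((T ^^ n) y - JA ((T ^^ n) y))"
      by (simp only: it(2)) (simp add: it(1) veq algebra_simps)
    have "s n - cc y = (JA ((T ^^ n) x) - JA ((T ^^ n) y),
        ((T ^^ n) x - JA ((T ^^ n) x)) - ((T ^^ n) y - JA ((T ^^ n) y)))"
      unfolding s_def cc_def JAi JA_def[symmetric] using c1 c2 by simp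
    then show ?thesis unfolding phi_def JA_def[symmetric] by (simp add: norm_Pair)
  qed
  have fej: "norm (s (Suc n) - cc y) \<le> norm (s n - cc y)" if "y \<in> F" for y n
  proof -
    have "norm (s (Suc n) - cc y)^2 = phi A (T ((T ^^ n) x)) (T ((T ^^ n) y))"
      using dist_eq[OF that, of "Suc n"] by simp
    also have "\<dots> \<le> phi A ((T ^^ n) x) ((T ^^ n) y)" by (rule dr_fejer(1)[OF mA' mB' T_def])
    also have "\<dots> = norm (s n - cc y)^2" using dist_eq[OF that, of n] by simp
    finally show ?thesis by (rule power2_le_imp_le) simp
  qed
  have fF: "f \<in> F" using f unfolding F_def .
  have P1: "fejer_monotone {(resolvent A y, resolvent (op_inv A) y) | y. y \<in> fixset v T} s"
    unfolding fejer_monotone_def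
  proof (intro conjI ballI allI)
    show "{(resolvent A y, resolvent (op_inv A) y) | y. y \<in> fixset v T} \<noteq> {}" using f by blast
    fix c n assume "c \<in> {(resolvent A y, resolvent (op_inv A) y) | y. y \<in> fixset v T}"
    then obtain y where "y \<in> F" "c = cc y" unfolding F_def cc_def by blast
    then show "norm (s (Suc n) - c) \<le> norm (s n - c)" using fej by blast
  qed
  have ne: "norm ((T ^^ n) x - (T ^^ n) f) \<le> norm (x - f)" for n
  proof (induction n)
    case 0 then show ?case by simp
  next
    case (Suc n)
    have "norm ((T ^^ Suc n) x - (T ^^ Suc n) f) = norm (T ((T ^^ n) x) - T ((T ^^ n) f))" by simp
    also have "\<dots> \<le> norm ((T ^^ n) x - (T ^^ n) f)" by (rule dr_fejer(3)[OF mA' mB' T_def])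
    finally show ?case using Suc by linarith
  qed
  have fn: "(T ^^ n) f = f - real n *\<^sub>R v" for n using iter[OF fF, of n] by blast
  have sb: "norm (s n - cc f) \<le> norm (s 0 - cc f)" for n
  proof (induction n)
    case 0 then show ?case by simp
  next
    case (Suc n) then show ?case using fej[OF fF, of n] by linarith
  qed
  define Bs where "Bs = norm (cc f) + norm (s 0 - cc f)"
  have sB: "norm (s n) \<le> Bs" for n
  proof -
    have "norm (s n) \<le> norm (cc f) + norm (s n - cc f)" by (rule norm_triangle_sub)
    then show ?thesis unfolding Bs_def using sb[of n] by linarith
  qed
  have c1B: "norm (resolvent A ((T ^^ n) x) + real n *\<^sub>R vR) \<le> Bs" for n
    using sB[of n] norm_fst_le[of "resolvent A ((T ^^ n) x) + real n *\<^sub>R vR"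
        "resolvent (op_inv A) ((T ^^ n) x) + real n *\<^sub>R vD"] unfolding s_def by linarith
  have c2B: "norm (resolvent (op_inv A) ((T ^^ n) x) + real n *\<^sub>R vD) \<le> Bs" for n
    using sB[of n] norm_snd_le[of "resolvent (op_inv A) ((T ^^ n) x) + real n *\<^sub>R vD"
        "resolvent A ((T ^^ n) x) + real n *\<^sub>R vR"] unfolding s_def by linarith
  have P2: "bounded (range s)"
  proof (rule bounded_subset[OF bounded_cball])
    show "range s \<subseteq> cball (cc f) (norm (s 0 - cc f))"
      using sb by (auto simp: dist_norm norm_minus_commute)
  qed
  have step_bd: "norm ((T ^^ Suc n) x - (T ^^ n) x) \<le> 2 * norm (x - f) + norm v" for n
  proof -
    define P where "P = (T ^^ Suc n) x - (T ^^ Suc n) f"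
    define Q where "Q = (T ^^ n) x - (T ^^ n) f"
    have eq: "(T ^^ Suc n) x - (T ^^ n) x = (P - v) - Q"
      unfolding P_def Q_def fn by (simp add: algebra_simps)
    have "norm ((T ^^ Suc n) x - (T ^^ n) x) = norm ((P - v) - Q)" unfolding eq ..
    also have "\<dots> \<le> norm (P - v) + norm Q" by (rule norm_triangle_ineq4)
    also have "\<dots> \<le> norm P + norm v + norm Q" using norm_triangle_ineq4[of P v] by simp
    finally show ?thesis using ne[of n] ne[of "Suc n"] unfolding P_def Q_def by linarith
  qed
  have Tz: "T z = z - resolvent A z + resolvent B (reflected A z)" for z using T_def by simp
  have JBe: "resolvent B (reflected A z) = T z - z + resolvent A z" for z
    using Tz[of z] by (simp add: algebra_simps)
  have JBie: "resolvent (op_inv B) (reflected A z) = resolvent A z - T z" for z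
    unfolding JBi JBe by (simp add: reflected_def algebra_simps scaleR_2)
  have P3a: "bounded (range (\<lambda>n. resolvent B (reflected A ((T ^^ n) x)) + real n *\<^sub>R vR))"
    unfolding bounded_iff
  proof (intro exI ballI)
    fix w assume "w \<in> range (\<lambda>n. resolvent B (reflected A ((T ^^ n) x)) + real n *\<^sub>R vR)"
    then obtain n where w: "w = resolvent B (reflected A ((T ^^ n) x)) + real n *\<^sub>R vR" by blast
    have "w = ((T ^^ Suc n) x - (T ^^ n) x) + (resolvent A ((T ^^ n) x) + real n *\<^sub>R vR)"
      unfolding w JBe by simp
    then have "norm w \<le> norm ((T ^^ Suc n) x - (T ^^ n) x) + norm (resolvent A ((T ^^ n) x) + real n *\<^sub>R vR)"
      by (simp only: norm_triangle_ineq)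
    then show "norm w \<le> 2 * norm (x - f) + norm v + Bs" using step_bd[of n] c1B[of n] by linarith
  qed
  have P3b: "bounded (range (\<lambda>n. resolvent (op_inv B) (reflected A ((T ^^ n) x)) - real n *\<^sub>R vD))"
    unfolding bounded_iff
  proof (intro exI ballI)
    fix w assume "w \<in> range (\<lambda>n. resolvent (op_inv B) (reflected A ((T ^^ n) x)) - real n *\<^sub>R vD)"
    then obtain n where w: "w = resolvent (op_inv B) (reflected A ((T ^^ n) x)) - real n *\<^sub>R vD" by blast
    define P where "P = resolvent A ((T ^^ n) x) + real n *\<^sub>R vR"
    define Q where "Q = (T ^^ Suc n) x - (T ^^ Suc n) f"
    have eq: "w = (P - Q) - (f - v)"
      unfolding w JBie fn veq P_def Q_def by (simp add: algebra_simps)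
    have "norm w = norm ((P - Q) - (f - v))" unfolding eq ..
    also have "\<dots> \<le> norm (P - Q) + norm (f - v)" by (rule norm_triangle_ineq4)
    also have "\<dots> \<le> norm P + norm Q + norm (f - v)" using norm_triangle_ineq4[of P Q] by simp
    finally have "norm w \<le> norm (resolvent A ((T ^^ n) x) + real n *\<^sub>R vR)
        + norm ((T ^^ Suc n) x - (T ^^ Suc n) f) + norm (f - v)" unfolding P_def Q_def .
    moreover have "norm (f - v) \<le> norm f + norm v" by (rule norm_triangle_ineq4)
    ultimately show "norm w \<le> Bs + norm (x - f) + (norm f + norm v)" using ne[of "Suc n"] c1B[of n] by linarith
  qed
  have P3: "bounded (range (\<lambda>n. (resolvent B (reflected A ((T ^^ n) x)) + real n *\<^sub>R vR,
             resolvent (op_inv B) (reflected A ((T ^^ n) x)) - real n *\<^sub>R vD)))"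
    by (rule bounded_subset[OF bounded_Times[OF P3a P3b]]) auto
  have Sfix: "z + k + v \<in> F \<and> cc (z + k + v) = (z, k + v)" if zk: "(z, k) \<in> solS A B v" for z k
  proof -
    have k1: "- k \<in> B (z - v)" and k2: "k \<in> (\<lambda>u. - v + u) ` A z" using zk unfolding solS_def by auto
    have kA: "(z + k + v) - z \<in> A z" using k2 by auto
    have Jy: "resolvent A (z + k + v) = z" by (rule resolvent_eq[OF mA' kA])
    have Jiy: "resolvent (op_inv A) (z + k + v) = k + v" unfolding JAi JA_def Jy by simp
    have kB: "reflected A (z + k + v) - (z - v) \<in> B (z - v)"
      unfolding reflected_def Jy using k1 by (simp add: algebra_simps scaleR_2)
    have JBy: "resolvent B (reflected A (z + k + v)) = z - v" by (rule resolvent_eq[OF mB' kB])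
    have "T (z + k + v) = (z + k + v) - v" unfolding T_def Jy JBy by simp
    then have "z + k + v \<in> F" unfolding F_def fixset_def by simp
    moreover have "cc (z + k + v) = (z, k + v)" unfolding cc_def Jy Jiy ..
    ultimately show ?thesis by blast
  qed
  have S0: "(JA f, resolvent (op_inv A) f - v) \<in> solS A B v"
  proof -
    define a where "a = JA f"
    define b where "b = resolvent B (reflected A f)"
    have aA: "f - a \<in> A a" unfolding a_def JA_def by (rule resolvent_in[OF mA'])
    have bB: "reflected A f - b \<in> B b" unfolding b_def by (rule resolvent_in[OF mB'])
    have "T f = f - a + b" unfolding T_def a_def b_def JA_def by simp
    then have beq: "b = a - v" using fs(1)[OF fF] by (simp add: algebra_simps)
    have rf: "reflected A f - b = - (f - a - v)" unfolding reflected_def beq a_def JA_def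
      by (simp add: algebra_simps scaleR_2)
    have k1': "- (f - a - v) \<in> B b" using bB unfolding rf .
    have k1: "- (f - a - v) \<in> B (a - v)" using k1' unfolding beq .
    have k2: "f - a - v \<in> (\<lambda>u. - v + u) ` A a" using aA by (auto intro: image_eqI[of _ _ "f - a"])
    have "resolvent (op_inv A) f - v = f - a - v" unfolding JAi a_def ..
    then show ?thesis using k1 k2 unfolding solS_def a_def by simp
  qed
  have P4: "fejer_monotone (solS A B v) (\<lambda>n. (0, - v) + s n)"
    unfolding fejer_monotone_def
  proof (intro conjI ballI allI)
    show "solS A B v \<noteq> {}" using S0 by blast
    fix c n assume c: "c \<in> solS A B v"
    obtain z k where zk: "c = (z, k)" by (cases c)
    have y: "z + k + v \<in> F" and cy: "cc (z + k + v) = (z, k + v)" using Sfix c zk by blast+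
    have e: "(0, - v) + s m - c = s m - cc (z + k + v)" for m
      unfolding zk cy by (simp add: algebra_simps)
    show "norm ((0, - v) + s (Suc n) - c) \<le> norm ((0, - v) + s n - c)"
      unfolding e by (rule fej[OF y])
  qed
  have lowR: "real n * norm vR \<le> norm (resolvent A ((T ^^ n) x)) + Bs" for n
  proof -
    have "real n *\<^sub>R vR = (resolvent A ((T ^^ n) x) + real n *\<^sub>R vR) - resolvent A ((T ^^ n) x)" by simp
    moreover have "norm ((resolvent A ((T ^^ n) x) + real n *\<^sub>R vR) - resolvent A ((T ^^ n) x)) \<le> norm (resolvent A ((T ^^ n) x) + real n *\<^sub>R vR) + norm (resolvent A ((T ^^ n) x))"
      by (rule norm_triangle_ineq4)
    ultimately have "norm (real n *\<^sub>R vR) \<le> norm (resolvent A ((T ^^ n) x) + real n *\<^sub>R vR) + norm (resolvent A ((T ^^ n) x))"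
      by simp
    then show ?thesis using c1B[of n] by simp
  qed
  have lowD: "real n * norm vD \<le> norm (resolvent (op_inv A) ((T ^^ n) x)) + Bs" for n
  proof -
    have "real n *\<^sub>R vD = (resolvent (op_inv A) ((T ^^ n) x) + real n *\<^sub>R vD) - resolvent (op_inv A) ((T ^^ n) x)" by simp
    moreover have "norm ((resolvent (op_inv A) ((T ^^ n) x) + real n *\<^sub>R vD) - resolvent (op_inv A) ((T ^^ n) x)) \<le> norm (resolvent (op_inv A) ((T ^^ n) x) + real n *\<^sub>R vD) + norm (resolvent (op_inv A) ((T ^^ n) x))"
      by (rule norm_triangle_ineq4)
    ultimately have "norm (real n *\<^sub>R vD) \<le> norm (resolvent (op_inv A) ((T ^^ n) x) + real n *\<^sub>R vD) + norm (resolvent (op_inv A) ((T ^^ n) x))"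
      by simp
    then show ?thesis using c2B[of n] by simp
  qed
  have unb: "\<And>g :: nat \<Rightarrow> 'a. \<And>w :: 'a. w \<noteq> 0 \<Longrightarrow> (\<And>n. real n * norm w \<le> norm (g n) + Bs)
      \<Longrightarrow> filterlim (\<lambda>n. norm (g n)) at_top sequentially"
  proof -
    fix g :: "nat \<Rightarrow> 'a" and w :: 'a
    assume w: "w \<noteq> 0" and lw: "\<And>n. real n * norm w \<le> norm (g n) + Bs"
    have nw: "0 < norm w" using w by simp
    show "filterlim (\<lambda>n. norm (g n)) at_top sequentially"
      unfolding filterlim_at_top eventually_sequentially
    proof
      fix Z :: real
      obtain N :: nat where N: "(Z + Bs) / norm w < real N" using reals_Archimedean2 by blast
      show "\<exists>N. \<forall>n\<ge>N. Z \<le> norm (g n)"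
      proof (intro exI allI impI)
        fix n assume "N \<le> n"
        then have "real N \<le> real n" by simp
        then have "(Z + Bs) / norm w < real n" using N by linarith
        then have "Z + Bs < real n * norm w" using nw by (simp add: pos_divide_less_eq)
        then show "Z \<le> norm (g n)" using lw[of n] by linarith
      qed
    qed
  qed
  have bdd_unb: "\<not> bounded (range (\<lambda>n. norm (g n)))" if "filterlim (\<lambda>n. norm (g n)) at_top sequentially"
    for g :: "nat \<Rightarrow> 'a"
  proof
    assume "bounded (range (\<lambda>n. norm (g n)))"
    then obtain M where M: "\<And>n. norm (norm (g n)) \<le> M" unfolding bounded_iff by blast
    have "eventually (\<lambda>n. M + 1 \<le> norm (g n)) sequentially"
      using that unfolding filterlim_at_top by blast
    then obtain n where "M + 1 \<le> norm (g n)" unfolding eventually_sequentially by blast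
    then show False using M[of n] by simp
  qed
  have P6: "vR \<noteq> 0 \<longrightarrow> filterlim (\<lambda>n. norm (resolvent A ((T ^^ n) x))) at_top sequentially"
    using unb[of vR "\<lambda>n. resolvent A ((T ^^ n) x)"] lowR by blast
  have P8: "vD \<noteq> 0 \<longrightarrow> filterlim (\<lambda>n. norm (resolvent (op_inv A) ((T ^^ n) x))) at_top sequentially"
    using unb[of vD "\<lambda>n. resolvent (op_inv A) ((T ^^ n) x)"] lowD by blast
  have P5: "bounded (range (\<lambda>n. resolvent A ((T ^^ n) x))) \<longleftrightarrow> vR = 0"
  proof
    assume b: "bounded (range (\<lambda>n. resolvent A ((T ^^ n) x)))"
    show "vR = 0"
    proof (rule ccontr)
      assume "vR \<noteq> 0"
      then have "\<not> bounded (range (\<lambda>n. norm (resolvent A ((T ^^ n) x))))" using P6 bdd_unb[of "\<lambda>n. resolvent A ((T ^^ n) x)"] by blast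
      moreover have "bounded (range (\<lambda>n. norm (resolvent A ((T ^^ n) x))))"
        using b unfolding bounded_iff by auto
      ultimately show False by blast
    qed
  next
    assume "vR = 0"
    then show "bounded (range (\<lambda>n. resolvent A ((T ^^ n) x)))"
      unfolding bounded_iff using c1B by auto
  qed
  have P7: "bounded (range (\<lambda>n. resolvent (op_inv A) ((T ^^ n) x))) \<longleftrightarrow> vD = 0"
  proof
    assume b: "bounded (range (\<lambda>n. resolvent (op_inv A) ((T ^^ n) x)))"
    show "vD = 0"
    proof (rule ccontr)
      assume "vD \<noteq> 0"
      then have "\<not> bounded (range (\<lambda>n. norm (resolvent (op_inv A) ((T ^^ n) x))))" using P8 bdd_unb[of "\<lambda>n. resolvent (op_inv A) ((T ^^ n) x)"] by blast
      moreover have "bounded (range (\<lambda>n. norm (resolvent (op_inv A) ((T ^^ n) x))))"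
        using b unfolding bounded_iff by auto
      ultimately show False by blast
    qed
  next
    assume "vD = 0"
    then show "bounded (range (\<lambda>n. resolvent (op_inv A) ((T ^^ n) x)))"
      unfolding bounded_iff using c2B by auto
  qed
  have P9: "paramonotone A \<and> paramonotone B \<longrightarrow>
        fejer_monotone (solZ A B v \<times> solK A B v) (\<lambda>n. (0, - v) + s n)"
  proof
    assume pp: "paramonotone A \<and> paramonotone B"
    have eqS: "solZ A B v \<times> solK A B v = solS A B v"
      using ZK_sub_S[of A B v] S_sub_ZK[of A B v] pp by blast
    show "fejer_monotone (solZ A B v \<times> solK A B v) (\<lambda>n. (0, - v) + s n)"
      unfolding eqS by (rule P4)
  qed
  show ?thesis using P1 P2 P3 P4 P5 P6 P7 P8 P9 unfolding s_def by blast
qed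

end
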